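(* Let $T>0$, $N\ge1$, $B^1,\dots,B^N$ independent standard real Brownian motions with augmented natural filtration $\mathscr{F}^{(N)}$; let $\xi^i$, $f^i$, $h$ (increasing, bi-Lipschitz with constants $0<m\le M$, $\mathbb{E}[h(\xi)]\ge0$), $\theta^i=\xi^i+\psi^{(N)}_T$ be as described in the context, and let $(\{Y^i,Z^i\}_{1\le i\le N},K^{(N)})$ be the unique square integrable flat solution of \[ Y_t^i=\theta^i+\int_t^T f_u^i\,du-\int_t^T\sum_{j=1}^N Z_u^{i,j}\,dB_u^j+K_T^{(N)}-K_t^{(N)},\quad 1\le i\le N,\qquad \frac1N\sum_{i=1}^N h(Y_t^i)\ge0 . \] Fix $0\le t\le T$. Then for every $1\le i\le N$, \[ Y^i_s=\mathbb{E}\Big[Y^i_t+\int_s^t f^i_u\,du\,\Big|\,\mathscr{F}^{(N)}_s\Big]+R_s,\qquad 0\le s\le t, \] where $\{R_s\}_{0\le s\le t}$ is the Snell envelope (on $[0,t]$, with respect to $\mathscr{F}^{(N)}$) of the process \[ \phi^{(N)}_s=\inf\Big\{x\ge0:\frac1N\sum_{i=1}^N h\Big(x+\mathbb{E}\Big[Y^i_t+\int_s^t f^i_u\,du\,\Big|\,\mathscr{F}^{(N)}_s\Big]\Big)\ge0\Big\},\qquad 0\le s\le t. \]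
   Context: $\xi=G(\{B_t\}_{t\le T})$ is square integrable, $f_t=F(t,\{B_{s\wedge t}\}_{s\le T})$ is progressively measurable with $\mathbb{E}\int_0^T|f_t|^2dt<\infty$ ($B$ a standard Brownian motion, $G,F$ measurable), and $\xi^i=G(\{B^i_t\})$, $f^i_t=F(t,\{B^i_{s\wedge t}\})$. $h:\mathbb{R}\to\mathbb{R}$ is increasing with $m|x-y|\le|h(x)-h(y)|\le M|x-y|$. $\psi^{(N)}_T=\inf\{x\ge0:\frac1N\sum_i h(x+\xi^i)\ge0\}$. A square integrable flat solution means $Y^i\in\mathscr{S}^2$ (adapted continuous, $\mathbb{E}\sup|Y|^2<\infty$), $Z^i$ predictable $\mathbb{R}^N$-valued with $\mathbb{E}\int_0^T|Z^i|^2<\infty$, $K^{(N)}$ continuous adapted non-decreasing with $K^{(N)}_0=0$ and $\mathbb{E}\sup|K^{(N)}|^2<\infty$, the equations and constraint hold for all $t$, and $\int_0^T\frac1N\sum_i h(Y^i_t)\,dK^{(N)}_t=0$. (Existence and uniqueness of this solution hold under these assumptions.) *)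

theory Defs
  imports "HOL-Probability.Probability"
begin

(* Indices of the particles: i, j range over {..<N} (i.e. 0..N-1 instead of 1..N). *)

definition nat_gen :: "'a measure \<Rightarrow> nat \<Rightarrow> (nat \<Rightarrow> real \<Rightarrow> 'a \<Rightarrow> real) \<Rightarrow> real \<Rightarrow> 'a set set" where
  "nat_gen M N B s =
     {(\<lambda>\<omega>. B j u \<omega>) -` A \<inter> space M | j u A. j < N \<and> 0 \<le> u \<and> u \<le> s \<and> A \<in> sets borel}"

definition aug_filt :: "'a measure \<Rightarrow> nat \<Rightarrow> (nat \<Rightarrow> real \<Rightarrow> 'a \<Rightarrow> real) \<Rightarrow> real \<Rightarrow> 'a measure" where
  "aug_filt M N B s = sigma (space M) (nat_gen M N B s \<union> null_sets M)"

definition indep_std_BMs :: "'a measure \<Rightarrow> nat \<Rightarrow> real \<Rightarrow> (nat \<Rightarrow> real \<Rightarrow> 'a \<Rightarrow> real) \<Rightarrow> bool" where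
  "indep_std_BMs M N T B \<longleftrightarrow>
     (\<forall>j<N. \<forall>t\<in>{0..T}. B j t \<in> borel_measurable M) \<and>
     (\<forall>j<N. \<forall>\<omega>\<in>space M. B j 0 \<omega> = 0 \<and> continuous_on {0..T} (\<lambda>t. B j t \<omega>)) \<and>
     (\<forall>s t. 0 \<le> s \<longrightarrow> s < t \<longrightarrow> t \<le> T \<longrightarrow>
        (\<forall>j<N. distributed M lborel (\<lambda>\<omega>. B j t \<omega> - B j s \<omega>) (normal_density 0 (sqrt (t - s)))) \<and>
        prob_space.indep_sets M
          (\<lambda>k. case k of None \<Rightarrow> sigma_sets (space M) (nat_gen M N B s)
                       | Some j \<Rightarrow> {(\<lambda>\<omega>. B j t \<omega> - B j s \<omega>) -` A \<inter> space M | A. A \<in> sets borel})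
          (insert None (Some ` {..<N})))"

definition adapted :: "(real \<Rightarrow> 'a measure) \<Rightarrow> real \<Rightarrow> (real \<Rightarrow> 'a \<Rightarrow> real) \<Rightarrow> bool" where
  "adapted F T X \<longleftrightarrow> (\<forall>t\<in>{0..T}. X t \<in> borel_measurable (F t))"

definition progressive :: "(real \<Rightarrow> 'a measure) \<Rightarrow> real \<Rightarrow> (real \<Rightarrow> 'a \<Rightarrow> real) \<Rightarrow> bool" where
  "progressive F T X \<longleftrightarrow>
     (\<forall>t\<in>{0..T}. (\<lambda>(u, \<omega>). X u \<omega>) \<in> borel_measurable (restrict_space borel {0..t} \<Otimes>\<^sub>M F t))"

definition pred_sigma :: "'a measure \<Rightarrow> (real \<Rightarrow> 'a measure) \<Rightarrow> real \<Rightarrow> (real \<times> 'a) measure" where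
  "pred_sigma M F T = sigma ({0..T} \<times> space M)
     ({{0} \<times> A | A. A \<in> sets (F 0)} \<union>
      {{s<..u} \<times> A | s u A. 0 \<le> s \<and> s < u \<and> u \<le> T \<and> A \<in> sets (F s)})"

definition predictable :: "'a measure \<Rightarrow> (real \<Rightarrow> 'a measure) \<Rightarrow> real \<Rightarrow> (real \<Rightarrow> 'a \<Rightarrow> real) \<Rightarrow> bool" where
  "predictable M F T X \<longleftrightarrow> (\<lambda>(u, \<omega>). X u \<omega>) \<in> borel_measurable (pred_sigma M F T)"

definition simple_ok :: "(real \<Rightarrow> 'a measure) \<Rightarrow> real \<Rightarrow> nat \<Rightarrow> (nat \<Rightarrow> real) \<Rightarrow> (nat \<Rightarrow> 'a \<Rightarrow> real) \<Rightarrow> bool" where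
  "simple_ok F T n p c \<longleftrightarrow> 0 \<le> p 0 \<and> p n \<le> T \<and> (\<forall>k<n. p k < p (Suc k)) \<and>
     (\<forall>k<n. c k \<in> borel_measurable (F (p k)) \<and> (\<exists>C. \<forall>\<omega>\<in>space (F (p k)). \<bar>c k \<omega>\<bar> \<le> C))"

definition simple_proc :: "nat \<Rightarrow> (nat \<Rightarrow> real) \<Rightarrow> (nat \<Rightarrow> 'a \<Rightarrow> real) \<Rightarrow> real \<Rightarrow> 'a \<Rightarrow> real" where
  "simple_proc n p c u \<omega> = (\<Sum>k<n. c k \<omega> * indicator {p k<..p (Suc k)} u)"

definition simple_int :: "(real \<Rightarrow> 'a \<Rightarrow> real) \<Rightarrow> nat \<Rightarrow> (nat \<Rightarrow> real) \<Rightarrow> (nat \<Rightarrow> 'a \<Rightarrow> real) \<Rightarrow> real \<Rightarrow> 'a \<Rightarrow> real" where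
  "simple_int W n p c t \<omega> = (\<Sum>k<n. c k \<omega> * (W (min (p (Suc k)) t) \<omega> - W (min (p k) t) \<omega>))"

definition is_ito_integral :: "'a measure \<Rightarrow> (real \<Rightarrow> 'a measure) \<Rightarrow> real \<Rightarrow> (real \<Rightarrow> 'a \<Rightarrow> real)
      \<Rightarrow> (real \<Rightarrow> 'a \<Rightarrow> real) \<Rightarrow> (real \<Rightarrow> 'a \<Rightarrow> real) \<Rightarrow> bool" where
  "is_ito_integral M F T W X I \<longleftrightarrow>
     (\<forall>\<omega>\<in>space M. continuous_on {0..T} (\<lambda>t. I t \<omega>)) \<and> adapted F T I \<and>
     (\<exists>n p c. (\<forall>k. simple_ok F T (n k) (p k) (c k)) \<and>
        (\<lambda>k. \<integral>\<^sup>+\<omega>. (\<integral>\<^sup>+u\<in>{0..T}. ennreal ((X u \<omega> - simple_proc (n k) (p k) (c k) u \<omega>)\<^sup>2) \<partial>lborel) \<partial>M)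
          \<longlonglongrightarrow> 0 \<and>
        (\<forall>t\<in>{0..T}. (\<lambda>k. \<integral>\<^sup>+\<omega>. ennreal ((simple_int W (n k) (p k) (c k) t \<omega> - I t \<omega>)\<^sup>2) \<partial>M)
          \<longlonglongrightarrow> 0))"

(* psi_T^{(N)}(omega) and phi_s^{(N)}(omega) are both of this form *)
definition min_shift :: "nat \<Rightarrow> (real \<Rightarrow> real) \<Rightarrow> (nat \<Rightarrow> real) \<Rightarrow> real" where
  "min_shift N h x = Inf {y. 0 \<le> y \<and> (\<Sum>i<N. h (y + x i)) / real N \<ge> 0}"

definition flat_solution :: "'a measure \<Rightarrow> (real \<Rightarrow> 'a measure) \<Rightarrow> nat \<Rightarrow> real \<Rightarrow> (nat \<Rightarrow> real \<Rightarrow> 'a \<Rightarrow> real)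
    \<Rightarrow> (real \<Rightarrow> real) \<Rightarrow> (nat \<Rightarrow> 'a \<Rightarrow> real) \<Rightarrow> (nat \<Rightarrow> real \<Rightarrow> 'a \<Rightarrow> real)
    \<Rightarrow> (nat \<Rightarrow> real \<Rightarrow> 'a \<Rightarrow> real) \<Rightarrow> (nat \<Rightarrow> nat \<Rightarrow> real \<Rightarrow> 'a \<Rightarrow> real) \<Rightarrow> (real \<Rightarrow> 'a \<Rightarrow> real) \<Rightarrow> bool" where
  "flat_solution M F N T B h \<theta> f Y Z K \<longleftrightarrow>
     (\<forall>i<N. adapted F T (Y i) \<and> (\<forall>\<omega>\<in>space M. continuous_on {0..T} (\<lambda>t. Y i t \<omega>)) \<and>
            (\<integral>\<^sup>+\<omega>. (SUP t\<in>{0..T}. ennreal ((Y i t \<omega>)\<^sup>2)) \<partial>M) < \<infinity>) \<and>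
     (\<forall>i<N. (\<forall>j<N. predictable M F T (Z i j)) \<and>
            (\<integral>\<^sup>+\<omega>. (\<integral>\<^sup>+u\<in>{0..T}. ennreal (\<Sum>j<N. (Z i j u \<omega>)\<^sup>2) \<partial>lborel) \<partial>M) < \<infinity>) \<and>
     adapted F T K \<and>
     (\<forall>\<omega>\<in>space M. continuous_on {0..T} (\<lambda>t. K t \<omega>) \<and> mono_on {0..T} (\<lambda>t. K t \<omega>) \<and> K 0 \<omega> = 0) \<and>
     (\<integral>\<^sup>+\<omega>. (SUP t\<in>{0..T}. ennreal ((K t \<omega>)\<^sup>2)) \<partial>M) < \<infinity> \<and>
     (\<forall>i<N. \<exists>I. (\<forall>j<N. is_ito_integral M F T (B j) (Z i j) (I j)) \<and>
        (AE \<omega> in M. \<forall>t\<in>{0..T}.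
           Y i t \<omega> = \<theta> i \<omega> + (LINT u:{t..T}|lborel. f i u \<omega>)
                      - (\<Sum>j<N. I j T \<omega> - I j t \<omega>) + K T \<omega> - K t \<omega>)) \<and>
     (AE \<omega> in M. \<forall>t\<in>{0..T}. (\<Sum>i<N. h (Y i t \<omega>)) / real N \<ge> 0) \<and>
     (AE \<omega> in M. (LINT u:{0..T}|interval_measure (\<lambda>u. K (max 0 (min u T)) \<omega>).
                     (\<Sum>i<N. h (Y i u \<omega>)) / real N) = 0)"

definition supermart :: "'a measure \<Rightarrow> (real \<Rightarrow> 'a measure) \<Rightarrow> real \<Rightarrow> (real \<Rightarrow> 'a \<Rightarrow> real) \<Rightarrow> bool" where
  "supermart M F t X \<longleftrightarrow> adapted F t X \<and> (\<forall>s\<in>{0..t}. integrable M (X s)) \<and>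
     (\<forall>s u. 0 \<le> s \<longrightarrow> s \<le> u \<longrightarrow> u \<le> t \<longrightarrow> (AE \<omega> in M. real_cond_exp M (F s) (X u) \<omega> \<le> X s \<omega>))"

definition snell_envelope :: "'a measure \<Rightarrow> (real \<Rightarrow> 'a measure) \<Rightarrow> real \<Rightarrow> (real \<Rightarrow> 'a \<Rightarrow> real)
     \<Rightarrow> (real \<Rightarrow> 'a \<Rightarrow> real) \<Rightarrow> bool" where
  "snell_envelope M F t \<phi> R \<longleftrightarrow>
     supermart M F t R \<and> (\<forall>s\<in>{0..t}. AE \<omega> in M. \<phi> s \<omega> \<le> R s \<omega>) \<and>
     (\<forall>S. supermart M F t S \<longrightarrow> (\<forall>s\<in>{0..t}. AE \<omega> in M. \<phi> s \<omega> \<le> S s \<omega>) \<longrightarrow>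
          (\<forall>s\<in>{0..t}. AE \<omega> in M. R s \<omega> \<le> S s \<omega>))"

end

theory Submission
  imports Defs
begin

locale bsde =
  fixes M :: "'a measure" and N :: nat and T :: real and B :: "nat \<Rightarrow> real \<Rightarrow> 'a \<Rightarrow> real"
  assumes PS: "prob_space M" and Tpos: "T > 0" and BM: "indep_std_BMs M N T B"
begin

interpretation P: prob_space M by (rule PS)

abbreviation "Fl \<equiv> aug_filt M N B"

lemma B_meas: "j < N \<Longrightarrow> 0 \<le> u \<Longrightarrow> u \<le> T \<Longrightarrow> B j u \<in> borel_measurable M"
  using BM unfolding indep_std_BMs_def by auto

lemma gen_sub: "s \<le> T \<Longrightarrow> nat_gen M N B s \<subseteq> sets M"
  unfolding nat_gen_def using B_meas by (auto intro!: measurable_sets)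

lemma gen_pow: "s \<le> T \<Longrightarrow> nat_gen M N B s \<union> null_sets M \<subseteq> Pow (space M)"
proof -
  assume s: "s \<le> T"
  have "nat_gen M N B s \<subseteq> sets M" using gen_sub[OF s] .
  moreover have "null_sets M \<subseteq> sets M" by auto
  ultimately show ?thesis using sets.sets_into_space by blast
qed

lemma sets_Fl: "s \<le> T \<Longrightarrow> sets (Fl s) = sigma_sets (space M) (nat_gen M N B s \<union> null_sets M)"
  unfolding aug_filt_def using gen_pow by (simp add: sets_measure_of)

lemma space_Fl[simp]: "space (Fl s) = space M"
  unfolding aug_filt_def by (simp add: space_measure_of_conv)

lemma sets_Fl_sub: "s \<le> T \<Longrightarrow> sets (Fl s) \<subseteq> sets M"
  unfolding sets_Fl using gen_sub by (intro sets.sigma_sets_subset) (auto dest: null_setsD1)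

lemma subalg: "s \<le> T \<Longrightarrow> subalgebra M (Fl s)"
  unfolding subalgebra_def using sets_Fl_sub by simp

lemma sfs: "s \<le> T \<Longrightarrow> sigma_finite_subalgebra M (Fl s)"
  apply (rule finite_measure_subalgebra_is_sigma_finite)
  unfolding finite_measure_subalgebra_def finite_measure_subalgebra_axioms_def
  using subalg P.finite_measure_axioms by auto

lemma gen_mono: "s \<le> u \<Longrightarrow> nat_gen M N B s \<subseteq> nat_gen M N B u"
  unfolding nat_gen_def by fastforce

lemma sets_Fl_mono: "s \<le> u \<Longrightarrow> u \<le> T \<Longrightarrow> sets (Fl s) \<subseteq> sets (Fl u)"
proof -
  assume a: "s \<le> u" "u \<le> T"
  have "nat_gen M N B s \<union> null_sets M \<subseteq> nat_gen M N B u \<union> null_sets M"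
    using gen_mono[OF a(1)] by blast
  then show ?thesis unfolding sets_Fl[OF a(2)] sets_Fl[OF order.trans[OF a]] by (rule sigma_sets_mono')
qed

lemma subalg_mono: "s \<le> u \<Longrightarrow> u \<le> T \<Longrightarrow> subalgebra (Fl u) (Fl s)"
  unfolding subalgebra_def using sets_Fl_mono by simp

lemma meas_Fl_M: "X \<in> borel_measurable (Fl s) \<Longrightarrow> s \<le> T \<Longrightarrow> X \<in> borel_measurable M"
  using measurable_from_subalg subalg by blast

lemma meas_Fl_mono: "X \<in> borel_measurable (Fl s) \<Longrightarrow> s \<le> u \<Longrightarrow> u \<le> T \<Longrightarrow> X \<in> borel_measurable (Fl u)"
  using measurable_from_subalg subalg_mono by blast

lemma null_Fl: "s \<le> T \<Longrightarrow> null_sets M \<subseteq> sets (Fl s)"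
  using sets_Fl by auto

end


context bsde begin

interpretation P: prob_space M by (rule PS)

lemma indep_aug:
  assumes r: "0 \<le> r" "r < v" "v \<le> T" and j: "j < N"
  shows "P.indep_set (sets (Fl r)) {(\<lambda>\<omega>. B j v \<omega> - B j r \<omega>) -` A \<inter> space M | A. A \<in> sets borel}"
proof -
  define D where "D = (\<lambda>\<omega>. B j v \<omega> - B j r \<omega>)"
  define C where "C = {D -` A \<inter> space M | A. A \<in> sets borel}"
  define G0 where "G0 = sigma_sets (space M) (nat_gen M N B r)"
  define E where "E = G0 \<union> null_sets M"
  have Dm: "D \<in> borel_measurable M" unfolding D_def using B_meas j r by auto
  have ind: "P.indep_sets
          (\<lambda>k. case k of None \<Rightarrow> sigma_sets (space M) (nat_gen M N B r)
                       | Some j \<Rightarrow> {(\<lambda>\<omega>. B j v \<omega> - B j r \<omega>) -` A \<inter> space M | A. A \<in> sets borel})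
          (insert None (Some ` {..<N}))"
    using BM r unfolding indep_std_BMs_def by blast
  have G0sub: "G0 \<subseteq> sets M" unfolding G0_def using gen_sub r by (intro sets.sigma_sets_subset) auto
  have Csub: "C \<subseteq> sets M" unfolding C_def using Dm by auto
  have key: "P.prob (a \<inter> c) = P.prob a * P.prob c" if "a \<in> G0" "c \<in> C" for a c
  proof -
    have "P.prob (\<Inter>k\<in>{None, Some j}. (case_option a (\<lambda>_. c)) k) =
          (\<Prod>k\<in>{None, Some j}. P.prob ((case_option a (\<lambda>_. c)) k))"
      apply (rule P.indep_setsD[OF ind])
      using j that unfolding G0_def C_def D_def by auto
    then show ?thesis by simp
  qed
  have "P.indep_set E C"
  proof (rule P.indep_setI)
    show "E \<subseteq> P.events" unfolding E_def using G0sub by auto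
    show "C \<subseteq> P.events" by (rule Csub)
    fix a c assume a: "a \<in> E" and c: "c \<in> C"
    show "P.prob (a \<inter> c) = P.prob a * P.prob c"
    proof (cases "a \<in> G0")
      case True then show ?thesis using key c by auto
    next
      case False
      then have an: "a \<in> null_sets M" using a unfolding E_def by auto
      have "a \<inter> c \<in> null_sets M" using an c Csub by (metis Int_commute null_set_Int1 subsetD)
      then show ?thesis using an by (simp add: measure_def null_setsD1)
    qed
  qed
  then have "P.indep_sets (\<lambda>i. sigma_sets (space M) (case_bool E C i)) UNIV"
    unfolding P.indep_set_def
  proof (rule P.indep_sets_sigma)
    fix i :: bool
    show "Int_stable (case_bool E C i)"
    proof (cases i)
      case True
      have "Int_stable E"
      proof (rule Int_stableI)
        fix a b assume ab: "a \<in> E" "b \<in> E"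
        have sa: "sigma_algebra (space M) G0" unfolding G0_def
          apply (rule sigma_algebra_sigma_sets)
          using gen_pow[of r] r by auto
        show "a \<inter> b \<in> E"
        proof (cases "a \<in> G0 \<and> b \<in> G0")
          case True
          interpret S: sigma_algebra "space M" G0 by (rule sa)
          show ?thesis using True S.Int unfolding E_def by blast
        next
          case False
          then have "a \<in> null_sets M \<or> b \<in> null_sets M" using ab unfolding E_def by auto
          moreover have "a \<in> sets M" "b \<in> sets M" using ab G0sub unfolding E_def by auto
          ultimately have "a \<inter> b \<in> null_sets M"
          proof (elim disjE)
            assume "a \<in> null_sets M" "a \<in> sets M" "b \<in> sets M"
            then show ?thesis using null_set_Int2[of a M b] by simp
          next
            assume "b \<in> null_sets M" "a \<in> sets M" "b \<in> sets M"
            then show ?thesis using null_set_Int1[of b M a] by simp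
          qed
          then show ?thesis unfolding E_def by blast
        qed
      qed
      then show ?thesis using True by simp
    next
      case False
      have "Int_stable C"
      proof (rule Int_stableI)
        fix a b assume "a \<in> C" "b \<in> C"
        then obtain A1 A2 where "A1 \<in> sets borel" "A2 \<in> sets borel" "a = D -` A1 \<inter> space M" "b = D -` A2 \<inter> space M"
          unfolding C_def by auto
        then show "a \<inter> b \<in> C" unfolding C_def by (intro CollectI exI[of _ "A1 \<inter> A2"]) auto
      qed
      then show ?thesis using False by simp
    qed
  qed
  then have "P.indep_set (sigma_sets (space M) E) (sigma_sets (space M) C)"
    unfolding P.indep_set_def by (rule P.indep_sets_mono_sets) (auto split: bool.split)
  moreover have "sets (Fl r) = sigma_sets (space M) E"
    unfolding sets_Fl[OF r(2)[THEN less_imp_le, THEN order.trans, OF r(3)]] E_def G0_def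
  proof (rule sigma_sets_eqI)
    fix a assume "a \<in> nat_gen M N B r \<union> null_sets M"
    then show "a \<in> sigma_sets (space M) (sigma_sets (space M) (nat_gen M N B r) \<union> null_sets M)"
      by auto
  next
    fix b assume "b \<in> sigma_sets (space M) (nat_gen M N B r) \<union> null_sets M"
    then show "b \<in> sigma_sets (space M) (nat_gen M N B r \<union> null_sets M)"
      using sigma_sets_subseteq[of "nat_gen M N B r" "nat_gen M N B r \<union> null_sets M" "space M"] by auto
  qed
  ultimately show ?thesis
    unfolding D_def[symmetric] C_def[symmetric] P.indep_set_def
    by (rule_tac P.indep_sets_mono_sets) (auto split: bool.split)
qed

lemma indep_incr_integral:
  assumes r: "0 \<le> r" "r < v" "v \<le> T" and j: "j < N"
    and Ym: "Yv \<in> borel_measurable (Fl r)" and Yi: "integrable M Yv"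
  shows "integrable M (\<lambda>\<omega>. Yv \<omega> * (B j v \<omega> - B j r \<omega>))"
    and "(\<integral>\<omega>. Yv \<omega> * (B j v \<omega> - B j r \<omega>) \<partial>M) = 0"
proof -
  define D where "D = (\<lambda>\<omega>. B j v \<omega> - B j r \<omega>)"
  have Dm: "D \<in> borel_measurable M" unfolding D_def using B_meas j r by auto
  have dist: "distributed M lborel D (normal_density 0 (sqrt (v - r)))"
    using BM r j unfolding indep_std_BMs_def D_def by auto
  have Di: "integrable M D"
    apply (rule distributed_integrable_var[OF dist])
    apply simp
    apply (rule integrable_normal_moment_nz_1)
    using r by simp
  have DE: "(\<integral>\<omega>. D \<omega> \<partial>M) = 0"
  proof -
    have "0 < sqrt (v - r)" using r by simp
    then show ?thesis using P.normal_distributed_expectation[OF _ dist] by simp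
  qed
  have Ymm: "Yv \<in> borel_measurable M" using meas_Fl_M[OF Ym] r by simp
  have iv: "P.indep_var borel Yv borel D"
    unfolding P.indep_var_eq
  proof (intro conjI)
    show "P.random_variable borel Yv" by (rule Ymm)
    show "P.random_variable borel D" by (rule Dm)
    have "P.indep_set (sets (Fl r)) {D -` A \<inter> space M | A. A \<in> sets borel}"
      using indep_aug[OF r j] unfolding D_def .
    then show "P.indep_set (sigma_sets (space M) {Yv -` A \<inter> space M |A. A \<in> sets borel})
        (sigma_sets (space M) {D -` A \<inter> space M |A. A \<in> sets borel})"
      unfolding P.indep_set_def
    proof (rule P.indep_sets_mono_sets)
      fix i :: bool
      show "case_bool (sigma_sets (space M) {Yv -` A \<inter> space M |A. A \<in> sets borel})
             (sigma_sets (space M) {D -` A \<inter> space M |A. A \<in> sets borel}) i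
           \<subseteq> case_bool (sets (Fl r)) {D -` A \<inter> space M |A. A \<in> sets borel} i"
      proof (cases i)
        case True
        have "{Yv -` A \<inter> space M |A. A \<in> sets borel} \<subseteq> sets (Fl r)"
          using Ym by (auto dest: measurable_sets)
        then have "sigma_sets (space M) {Yv -` A \<inter> space M |A. A \<in> sets borel} \<subseteq> sets (Fl r)"
          using sets.sigma_sets_subset[of _ "Fl r"] by simp
        then show ?thesis using True by simp
      next
        case False
        have "sigma_sets (space M) {D -` A \<inter> space M |A. A \<in> sets borel} = {D -` A \<inter> space M |A. A \<in> sets borel}"
          using sigma_algebra.sigma_sets_eq[OF sets.sigma_algebra_axioms[of "vimage_algebra (space M) D borel"]]
          by (simp add: sets_vimage_algebra2 space_vimage_algebra)
        then show ?thesis using False by simp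
      qed
    qed
  qed
  show "integrable M (\<lambda>\<omega>. Yv \<omega> * (B j v \<omega> - B j r \<omega>))"
    using P.indep_var_integrable[OF iv Yi Di] unfolding D_def .
  show "(\<integral>\<omega>. Yv \<omega> * (B j v \<omega> - B j r \<omega>) \<partial>M) = 0"
    using P.indep_var_lebesgue_integral[OF iv Yi Di] DE unfolding D_def by simp
qed

end


lemma incr_ident:
  fixes W :: "real \<Rightarrow> real"
  assumes "a < b" "s \<le> t"
  shows "W (min b t) - W (min a t) - (W (min b s) - W (min a s)) =
         W (max s (min b t)) - W (max s (min a t))"
proof (cases "b \<le> s")
  case True then show ?thesis using assms by (simp add: min_def max_def)
next
  case False
  show ?thesis
  proof (cases "a \<le> s")
    case True
    then show ?thesis using assms False by (cases "b \<le> t") (simp_all add: min_def max_def)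
  next
    case F2: False
    then show ?thesis using assms False by (cases "b \<le> t"; cases "a \<le> t") (simp_all add: min_def max_def)
  qed
qed

lemma (in prob_space) L2_integrable:
  fixes g :: "'a \<Rightarrow> real"
  assumes gm: "g \<in> borel_measurable M" and fin: "(\<integral>\<^sup>+x. ennreal ((g x)\<^sup>2) \<partial>M) < \<infinity>"
  shows "integrable M g" "integrable M (\<lambda>x. (g x)\<^sup>2)"
    "(\<integral>x. \<bar>g x\<bar> \<partial>M) \<le> sqrt (enn2real (\<integral>\<^sup>+x. ennreal ((g x)\<^sup>2) \<partial>M))"
proof -
  show g2: "integrable M (\<lambda>x. (g x)\<^sup>2)"
    using fin gm by (intro integrableI_bounded) auto
  have "integrable M (\<lambda>x. 1 + (g x)\<^sup>2)" using g2 by auto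
  moreover have "\<bar>g x\<bar> \<le> 1 + (g x)\<^sup>2" for x
  proof (cases "\<bar>g x\<bar> \<le> 1")
    case True then show ?thesis by (simp add: add_increasing2)
  next
    case False
    then have "1 * \<bar>g x\<bar> \<le> \<bar>g x\<bar> * \<bar>g x\<bar>" by (intro mult_right_mono) auto
    then show ?thesis by (simp add: power2_eq_square abs_mult_self_eq)
  qed
  ultimately show gi: "integrable M g"
    by (intro Bochner_Integration.integrable_bound[of M "\<lambda>x. 1 + (g x)\<^sup>2" g]) (auto simp: gm)
  define a where "a = (\<integral>x. (g x)\<^sup>2 \<partial>M)"
  have aeq: "enn2real (\<integral>\<^sup>+x. ennreal ((g x)\<^sup>2) \<partial>M) = a"
    unfolding a_def using g2 by (subst integral_eq_nn_integral) auto
  have a0: "a \<ge> 0" unfolding a_def by simp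
  have "(\<integral>x. \<bar>g x\<bar> \<partial>M) \<le> sqrt a"
  proof (cases "a = 0")
    case True
    then have "AE x in M. (g x)\<^sup>2 = 0" unfolding a_def using g2
      by (subst (asm) integral_nonneg_eq_0_iff_AE) auto
    then have "AE x in M. \<bar>g x\<bar> = 0" by auto
    then have "(\<integral>x. \<bar>g x\<bar> \<partial>M) = 0" by (simp add: integral_eq_zero_AE)
    then show ?thesis using True by simp
  next
    case False
    define d where "d = sqrt a / 2"
    have d: "d > 0" using False a0 unfolding d_def by simp
    have pt: "\<bar>g x\<bar> \<le> d + (g x)\<^sup>2 / (4 * d)" for x
    proof -
      have "0 \<le> (\<bar>g x\<bar> - 2 * d)\<^sup>2" by simp
      then have "4 * d * \<bar>g x\<bar> \<le> 4 * d * d + (g x)\<^sup>2"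
        by (simp add: power2_eq_square algebra_simps abs_mult_self_eq)
      then show ?thesis using d by (simp add: field_simps)
    qed
    have "(\<integral>x. \<bar>g x\<bar> \<partial>M) \<le> (\<integral>x. d + (g x)\<^sup>2 / (4 * d) \<partial>M)"
      using pt gi g2 by (intro integral_mono) auto
    also have "\<dots> = d + a / (4 * d)" unfolding a_def using g2 by (simp add: prob_space)
    also have "\<dots> = sqrt a"
    proof -
      have sa: "sqrt a > 0" using False a0 by simp
      have "a = sqrt a * sqrt a" using a0 by simp
      then have "a / (4 * (sqrt a / 2)) = sqrt a / 2" using sa by (simp add: field_simps)
      then show ?thesis by (simp add: d_def)
    qed
    finally show ?thesis .
  qed
  then show "(\<integral>x. \<bar>g x\<bar> \<partial>M) \<le> sqrt (enn2real (\<integral>\<^sup>+x. ennreal ((g x)\<^sup>2) \<partial>M))"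
    using aeq by simp
qed

context bsde begin

interpretation P: prob_space M by (rule PS)

lemma incr_term:
  assumes r: "0 \<le> r" "r \<le> v" "v \<le> T" and j: "j < N"
    and Ym: "Yv \<in> borel_measurable (Fl r)" and Yi: "integrable M Yv"
  shows "integrable M (\<lambda>\<omega>. Yv \<omega> * (B j v \<omega> - B j r \<omega>))"
    and "(\<integral>\<omega>. Yv \<omega> * (B j v \<omega> - B j r \<omega>) \<partial>M) = 0"
proof -
  have "integrable M (\<lambda>\<omega>. Yv \<omega> * (B j v \<omega> - B j r \<omega>)) \<and> (\<integral>\<omega>. Yv \<omega> * (B j v \<omega> - B j r \<omega>) \<partial>M) = 0"
  proof (cases "r = v")
    case True then show ?thesis by simp
  next
    case False
    then have "r < v" using r by simp
    then show ?thesis using indep_incr_integral[OF r(1) _ r(3) j Ym Yi] by simp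
  qed
  then show "integrable M (\<lambda>\<omega>. Yv \<omega> * (B j v \<omega> - B j r \<omega>))"
    "(\<integral>\<omega>. Yv \<omega> * (B j v \<omega> - B j r \<omega>) \<partial>M) = 0" by auto
qed

lemma bounded_int:
  fixes C :: real
  assumes "f \<in> borel_measurable M" "\<forall>\<omega>\<in>space M. \<bar>f \<omega>\<bar> \<le> C"
  shows "integrable M f"
  using assms by (intro P.integrable_const_bound[where B=C]) auto

lemma simple_int_integrable:
  assumes ok: "simple_ok Fl T n p c" and j: "j < N" and t: "0 \<le> t" "t \<le> T"
  shows "integrable M (simple_int (B j) n p c t)"
proof -
  have "integrable M (\<lambda>\<omega>. c k \<omega> * (B j (min (p (Suc k)) t) \<omega> - B j (min (p k) t) \<omega>))" if k: "k < n" for k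
  proof (cases "p k \<le> t")
    case True
    have pk: "0 \<le> p k" "p k < p (Suc k)" "p (Suc k) \<le> T"
    proof -
      have mono: "\<And>a b. a \<le> b \<Longrightarrow> b \<le> n \<Longrightarrow> p a \<le> p b"
      proof -
        fix a b assume "a \<le> b" "b \<le> n"
        then show "p a \<le> p b"
        proof (induction b)
          case 0 then show ?case by simp
        next
          case (Suc b)
          then show ?case using ok unfolding simple_ok_def
          proof (cases "a = Suc b")
            case True then show ?thesis by simp
          next
            case False
            then have "a \<le> b" "b < n" using Suc.prems by auto
            then have "p a \<le> p b" using Suc.IH by simp
            moreover have "p b < p (Suc b)" using ok \<open>b < n\<close> unfolding simple_ok_def by auto
            ultimately show ?thesis by simp
          qed
        qed
      qed
      show "0 \<le> p k" using mono[of 0 k] ok k unfolding simple_ok_def by auto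
      show "p k < p (Suc k)" using ok k unfolding simple_ok_def by auto
      show "p (Suc k) \<le> T" using mono[of "Suc k" n] ok k unfolding simple_ok_def by auto
    qed
    have cm: "c k \<in> borel_measurable (Fl (p k))" using ok k unfolding simple_ok_def by auto
    obtain C where C: "\<forall>\<omega>\<in>space M. \<bar>c k \<omega>\<bar> \<le> C" using ok k unfolding simple_ok_def by auto
    have ci: "integrable M (c k)" using bounded_int[OF meas_Fl_M[OF cm] C] pk by simp
    show ?thesis using True
      by (intro incr_term(1)[OF _ _ _ j _ ci]) (use pk t cm in auto)
  next
    case False
    have "p k < p (Suc k)" using ok k unfolding simple_ok_def by auto
    then have "min (p (Suc k)) t = t" "min (p k) t = t" using False by auto
    then show ?thesis by simp
  qed
  then show ?thesis unfolding simple_int_def by auto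
qed

lemma simple_ok_p:
  assumes ok: "simple_ok Fl T n p c" and k: "k < n"
  shows "0 \<le> p k" "p k < p (Suc k)" "p (Suc k) \<le> T"
proof -
  have mono: "\<And>a b. a \<le> b \<Longrightarrow> b \<le> n \<Longrightarrow> p a \<le> p b"
  proof -
    fix a b assume "a \<le> b" "b \<le> n"
    then show "p a \<le> p b"
    proof (induction b)
      case 0 then show ?case by simp
    next
      case (Suc b)
      then show ?case
      proof (cases "a = Suc b")
        case True then show ?thesis by simp
      next
        case False
        then have "a \<le> b" "b < n" using Suc.prems by auto
        then have "p a \<le> p b" using Suc.IH by simp
        moreover have "p b < p (Suc b)" using ok \<open>b < n\<close> unfolding simple_ok_def by auto
        ultimately show ?thesis by simp
      qed
    qed
  qed
  show "0 \<le> p k" using mono[of 0 k] ok k unfolding simple_ok_def by auto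
  show "p k < p (Suc k)" using ok k unfolding simple_ok_def by auto
  show "p (Suc k) \<le> T" using mono[of "Suc k" n] ok k unfolding simple_ok_def by auto
qed

lemma simple_incr_zero:
  assumes ok: "simple_ok Fl T n p c" and j: "j < N" and st: "0 \<le> s" "s \<le> t" "t \<le> T"
    and A: "A \<in> sets (Fl s)"
  shows "integrable M (\<lambda>\<omega>. indicator A \<omega> * (simple_int (B j) n p c t \<omega> - simple_int (B j) n p c s \<omega>))"
    and "(\<integral>\<omega>. indicator A \<omega> * (simple_int (B j) n p c t \<omega> - simple_int (B j) n p c s \<omega>) \<partial>M) = 0"
proof -
  define u1 where "u1 k = max s (min (p k) t)" for k
  define u2 where "u2 k = max s (min (p (Suc k)) t)" for k
  define tm where "tm k \<omega> = (indicator A \<omega> * c k \<omega>) * (B j (u2 k) \<omega> - B j (u1 k) \<omega>)" for k \<omega>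
  have eq: "indicator A \<omega> * (simple_int (B j) n p c t \<omega> - simple_int (B j) n p c s \<omega>) = (\<Sum>k<n. tm k \<omega>)" for \<omega>
  proof -
    have "indicator A \<omega> * (simple_int (B j) n p c t \<omega> - simple_int (B j) n p c s \<omega>)
      = (\<Sum>k<n. indicator A \<omega> * c k \<omega> * ((B j (min (p (Suc k)) t) \<omega> - B j (min (p k) t) \<omega>)
             - (B j (min (p (Suc k)) s) \<omega> - B j (min (p k) s) \<omega>)))"
      unfolding simple_int_def by (simp add: sum_distrib_left sum_subtractf[symmetric] algebra_simps)
    also have "\<dots> = (\<Sum>k<n. tm k \<omega>)"
    proof (rule sum.cong)
      fix k assume "k \<in> {..<n}"
      then have "p k < p (Suc k)" using simple_ok_p[OF ok] by auto
      then show "indicator A \<omega> * c k \<omega> * ((B j (min (p (Suc k)) t) \<omega> - B j (min (p k) t) \<omega>)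
             - (B j (min (p (Suc k)) s) \<omega> - B j (min (p k) s) \<omega>)) = tm k \<omega>"
        unfolding tm_def u1_def u2_def using incr_ident[of "p k" "p (Suc k)" s t "\<lambda>u. B j u \<omega>"] st by simp
    qed simp
    finally show ?thesis .
  qed
  have tk: "integrable M (tm k) \<and> integral\<^sup>L M (tm k) = 0" if k: "k < n" for k
  proof (cases "u1 k = u2 k")
    case True then show ?thesis unfolding tm_def by simp
  next
    case False
    have pk: "0 \<le> p k" "p k < p (Suc k)" "p (Suc k) \<le> T" using simple_ok_p[OF ok k] by auto
    have le: "u1 k \<le> u2 k" unfolding u1_def u2_def using pk by (simp add: max_def min_def)
    have "p k \<le> t"
    proof (rule ccontr)
      assume "\<not> p k \<le> t"
      then show False using False pk unfolding u1_def u2_def by (simp add: min_def)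
    qed
    then have u1eq: "u1 k = max s (p k)" unfolding u1_def by simp
    have u2le: "u2 k \<le> T" unfolding u2_def using st pk by (simp add: max_def min_def)
    have cm: "c k \<in> borel_measurable (Fl (p k))" using ok k unfolding simple_ok_def by auto
    obtain C where C: "\<forall>\<omega>\<in>space M. \<bar>c k \<omega>\<bar> \<le> C" using ok k unfolding simple_ok_def by auto
    have cm': "c k \<in> borel_measurable (Fl (u1 k))"
      by (rule meas_Fl_mono[OF cm]) (use u1eq le u2le in auto)
    have Am: "indicator A \<in> borel_measurable (Fl (u1 k))"
      by (rule meas_Fl_mono[of _ s]) (use A u1eq le u2le in auto)
    have Ym: "(\<lambda>\<omega>. indicator A \<omega> * c k \<omega>) \<in> borel_measurable (Fl (u1 k))"
      using cm' Am by measurable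
    have Yi: "integrable M (\<lambda>\<omega>. indicator A \<omega> * c k \<omega>)"
    proof (rule bounded_int[where C="max C 0"])
      show "(\<lambda>\<omega>. indicator A \<omega> * c k \<omega>) \<in> borel_measurable M"
        using meas_Fl_M[OF Ym] le u2le by simp
      show "\<forall>\<omega>\<in>space M. \<bar>indicator A \<omega> * c k \<omega>\<bar> \<le> max C 0"
        using C by (auto simp: indicator_def abs_mult)
    qed
    have "0 \<le> u1 k" unfolding u1_def using st by simp
    then show ?thesis unfolding tm_def using incr_term[OF _ le u2le j Ym Yi] by simp
  qed
  show "integrable M (\<lambda>\<omega>. indicator A \<omega> * (simple_int (B j) n p c t \<omega> - simple_int (B j) n p c s \<omega>))"
    unfolding eq using tk by auto
  show "(\<integral>\<omega>. indicator A \<omega> * (simple_int (B j) n p c t \<omega> - simple_int (B j) n p c s \<omega>) \<partial>M) = 0"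
  proof -
    have "(\<integral>\<omega>. (\<Sum>k<n. tm k \<omega>) \<partial>M) = (\<Sum>k<n. \<integral>\<omega>. tm k \<omega> \<partial>M)"
      using Bochner_Integration.integral_sum[where I="{..<n}" and f=tm and M=M] tk by auto
    also have "\<dots> = 0" using tk by simp
    finally show ?thesis unfolding eq .
  qed
qed

end


context bsde begin

interpretation P: prob_space M by (rule PS)

lemma ito_props:
  assumes ito: "is_ito_integral M Fl T (B j) Z I" and j: "j < N"
  shows "\<And>t. 0 \<le> t \<Longrightarrow> t \<le> T \<Longrightarrow> integrable M (I t)"
    and "\<And>s t A. 0 \<le> s \<Longrightarrow> s \<le> t \<Longrightarrow> t \<le> T \<Longrightarrow> A \<in> sets (Fl s) \<Longrightarrow>
          (\<integral>\<omega>. indicator A \<omega> * (I t \<omega> - I s \<omega>) \<partial>M) = 0"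
proof -
  obtain n p c where ok: "\<And>k. simple_ok Fl T (n k) (p k) (c k)"
    and conv: "\<And>t. t \<in> {0..T} \<Longrightarrow> (\<lambda>k. \<integral>\<^sup>+\<omega>. ennreal ((simple_int (B j) (n k) (p k) (c k) t \<omega> - I t \<omega>)\<^sup>2) \<partial>M) \<longlonglongrightarrow> 0"
    using ito unfolding is_ito_integral_def by blast
  define J where "J k = simple_int (B j) (n k) (p k) (c k)" for k
  have Im: "I t \<in> borel_measurable M" if "0 \<le> t" "t \<le> T" for t
  proof -
    have "I t \<in> borel_measurable (Fl t)" using ito that unfolding is_ito_integral_def adapted_def by auto
    then show ?thesis using meas_Fl_M that by blast
  qed
  have Jm: "J k t \<in> borel_measurable M" if "0 \<le> t" "t \<le> T" for k t
    using simple_int_integrable[OF ok j that] unfolding J_def by auto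
  have ev: "eventually (\<lambda>k. integrable M (\<lambda>\<omega>. J k t \<omega> - I t \<omega>) \<and>
       (\<integral>\<omega>. \<bar>J k t \<omega> - I t \<omega>\<bar> \<partial>M) \<le> sqrt (enn2real (\<integral>\<^sup>+\<omega>. ennreal ((J k t \<omega> - I t \<omega>)\<^sup>2) \<partial>M))) sequentially"
    if t: "0 \<le> t" "t \<le> T" for t
  proof -
    have "eventually (\<lambda>k. (\<integral>\<^sup>+\<omega>. ennreal ((J k t \<omega> - I t \<omega>)\<^sup>2) \<partial>M) < 1) sequentially"
      using conv[of t] t unfolding J_def by (intro order_tendstoD(2)) auto
    then show ?thesis
    proof (rule eventually_mono)
      fix k assume "(\<integral>\<^sup>+\<omega>. ennreal ((J k t \<omega> - I t \<omega>)\<^sup>2) \<partial>M) < 1"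
      then have fin: "(\<integral>\<^sup>+\<omega>. ennreal ((J k t \<omega> - I t \<omega>)\<^sup>2) \<partial>M) < \<infinity>"
        unfolding infinity_ennreal_def using ennreal_one_less_top by (rule order.strict_trans)
      have gm: "(\<lambda>\<omega>. J k t \<omega> - I t \<omega>) \<in> borel_measurable M" using Jm[OF t] Im[OF t] by auto
      show "integrable M (\<lambda>\<omega>. J k t \<omega> - I t \<omega>) \<and>
       (\<integral>\<omega>. \<bar>J k t \<omega> - I t \<omega>\<bar> \<partial>M) \<le> sqrt (enn2real (\<integral>\<^sup>+\<omega>. ennreal ((J k t \<omega> - I t \<omega>)\<^sup>2) \<partial>M))"
        using P.L2_integrable[OF gm fin] by auto
    qed
  qed
  have lim: "(\<lambda>k. sqrt (enn2real (\<integral>\<^sup>+\<omega>. ennreal ((J k t \<omega> - I t \<omega>)\<^sup>2) \<partial>M))) \<longlonglongrightarrow> 0"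
    if t: "0 \<le> t" "t \<le> T" for t
  proof -
    have "(\<lambda>k. enn2real (\<integral>\<^sup>+\<omega>. ennreal ((J k t \<omega> - I t \<omega>)\<^sup>2) \<partial>M)) \<longlonglongrightarrow> enn2real 0"
      using conv[of t] t unfolding J_def by (intro tendsto_enn2real) auto
    then have "(\<lambda>k. sqrt (enn2real (\<integral>\<^sup>+\<omega>. ennreal ((J k t \<omega> - I t \<omega>)\<^sup>2) \<partial>M))) \<longlonglongrightarrow> sqrt (enn2real 0)"
      by (rule tendsto_real_sqrt)
    then show ?thesis by simp
  qed
  show It: "integrable M (I t)" if t: "0 \<le> t" "t \<le> T" for t
  proof -
    obtain k where k: "integrable M (\<lambda>\<omega>. J k t \<omega> - I t \<omega>)"
      using eventually_happens[OF ev[OF t]] by auto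
    have Ji: "integrable M (J k t)" using simple_int_integrable[OF ok j t] unfolding J_def by auto
    have "integrable M (\<lambda>\<omega>. J k t \<omega> - (J k t \<omega> - I t \<omega>))"
      by (rule Bochner_Integration.integrable_diff[OF Ji k])
    then show ?thesis by simp
  qed
  show "(\<integral>\<omega>. indicator A \<omega> * (I t \<omega> - I s \<omega>) \<partial>M) = 0"
    if st: "0 \<le> s" "s \<le> t" "t \<le> T" and A: "A \<in> sets (Fl s)" for s t A
  proof -
    have t: "0 \<le> t" "t \<le> T" and s: "0 \<le> s" "s \<le> T" using st by auto
    have Am: "A \<in> sets M" using A sets_Fl_sub s by auto
    define c0 where "c0 = (\<integral>\<omega>. indicator A \<omega> * (I t \<omega> - I s \<omega>) \<partial>M)"
    define e where "e k = sqrt (enn2real (\<integral>\<^sup>+\<omega>. ennreal ((J k t \<omega> - I t \<omega>)\<^sup>2) \<partial>M))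
        + sqrt (enn2real (\<integral>\<^sup>+\<omega>. ennreal ((J k s \<omega> - I s \<omega>)\<^sup>2) \<partial>M))" for k
    have elim: "e \<longlonglongrightarrow> 0" unfolding e_def using tendsto_add[OF lim[OF t] lim[OF s]] by simp
    have "eventually (\<lambda>k. \<bar>c0\<bar> \<le> e k) sequentially"
      using eventually_conj[OF ev[OF t] ev[OF s]]
    proof (rule eventually_mono)
      fix k assume H: "(integrable M (\<lambda>\<omega>. J k t \<omega> - I t \<omega>) \<and>
       (\<integral>\<omega>. \<bar>J k t \<omega> - I t \<omega>\<bar> \<partial>M) \<le> sqrt (enn2real (\<integral>\<^sup>+\<omega>. ennreal ((J k t \<omega> - I t \<omega>)\<^sup>2) \<partial>M))) \<and>
       (integrable M (\<lambda>\<omega>. J k s \<omega> - I s \<omega>) \<and>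
       (\<integral>\<omega>. \<bar>J k s \<omega> - I s \<omega>\<bar> \<partial>M) \<le> sqrt (enn2real (\<integral>\<^sup>+\<omega>. ennreal ((J k s \<omega> - I s \<omega>)\<^sup>2) \<partial>M)))"
      define gt where "gt \<omega> = J k t \<omega> - I t \<omega>" for \<omega>
      define gs where "gs \<omega> = J k s \<omega> - I s \<omega>" for \<omega>
      have gti: "integrable M gt" and gsi: "integrable M gs" using H unfolding gt_def gs_def by auto
      have zi: "integrable M (\<lambda>\<omega>. indicator A \<omega> * (J k t \<omega> - J k s \<omega>))"
        and z0: "(\<integral>\<omega>. indicator A \<omega> * (J k t \<omega> - J k s \<omega>) \<partial>M) = 0"
        using simple_incr_zero[OF ok j st A] unfolding J_def by auto
      have gti': "integrable M (\<lambda>\<omega>. indicator A \<omega> * gt \<omega>)"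
        using integrable_mult_indicator[OF Am gti] by simp
      have gsi': "integrable M (\<lambda>\<omega>. indicator A \<omega> * gs \<omega>)"
        using integrable_mult_indicator[OF Am gsi] by simp
      have "c0 = (\<integral>\<omega>. indicator A \<omega> * (J k t \<omega> - J k s \<omega>) - indicator A \<omega> * gt \<omega> + indicator A \<omega> * gs \<omega> \<partial>M)"
        unfolding c0_def gt_def gs_def by (rule Bochner_Integration.integral_cong) (auto simp: algebra_simps)
      also have "\<dots> = - (\<integral>\<omega>. indicator A \<omega> * gt \<omega> \<partial>M) + (\<integral>\<omega>. indicator A \<omega> * gs \<omega> \<partial>M)"
        using zi z0 gti' gsi' by simp
      finally have c0eq: "c0 = - (\<integral>\<omega>. indicator A \<omega> * gt \<omega> \<partial>M) + (\<integral>\<omega>. indicator A \<omega> * gs \<omega> \<partial>M)" .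
      have b1: "\<bar>\<integral>\<omega>. indicator A \<omega> * gt \<omega> \<partial>M\<bar> \<le> (\<integral>\<omega>. \<bar>gt \<omega>\<bar> \<partial>M)"
      proof -
        have "\<bar>\<integral>\<omega>. indicator A \<omega> * gt \<omega> \<partial>M\<bar> \<le> (\<integral>\<omega>. \<bar>indicator A \<omega> * gt \<omega>\<bar> \<partial>M)"
          by (rule integral_abs_bound)
        also have "\<dots> \<le> (\<integral>\<omega>. \<bar>gt \<omega>\<bar> \<partial>M)"
          using gti gti' by (intro integral_mono) (auto simp: indicator_def)
        finally show ?thesis .
      qed
      have b2: "\<bar>\<integral>\<omega>. indicator A \<omega> * gs \<omega> \<partial>M\<bar> \<le> (\<integral>\<omega>. \<bar>gs \<omega>\<bar> \<partial>M)"
      proof -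
        have "\<bar>\<integral>\<omega>. indicator A \<omega> * gs \<omega> \<partial>M\<bar> \<le> (\<integral>\<omega>. \<bar>indicator A \<omega> * gs \<omega>\<bar> \<partial>M)"
          by (rule integral_abs_bound)
        also have "\<dots> \<le> (\<integral>\<omega>. \<bar>gs \<omega>\<bar> \<partial>M)"
          using gsi gsi' by (intro integral_mono) (auto simp: indicator_def)
        finally show ?thesis .
      qed
      show "\<bar>c0\<bar> \<le> e k"
        using c0eq b1 b2 H unfolding e_def gt_def gs_def by linarith
    qed
    then have "\<bar>c0\<bar> \<le> 0"
      by (intro tendsto_le[OF _ elim tendsto_const]) auto
    then show ?thesis unfolding c0_def by simp
  qed
qed

end


locale bsde_f = bsde +
  fixes f :: "nat \<Rightarrow> real \<Rightarrow> 'a \<Rightarrow> real"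
  assumes prog: "\<forall>i<N. progressive (aug_filt M N B) T (f i)"
    and fL2: "\<forall>i<N. (\<integral>\<^sup>+\<omega>. (\<integral>\<^sup>+u\<in>{0..T}. ennreal ((f i u \<omega>)\<^sup>2) \<partial>lborel) \<partial>M) < \<infinity>"
begin

interpretation P: prob_space M by (rule PS)

lemma id_M_Fl: "t \<le> T \<Longrightarrow> (\<lambda>x. x) \<in> measurable M (Fl t)"
proof (rule measurableI)
  fix A assume "t \<le> T" "A \<in> sets (Fl t)"
  then have "A \<in> sets M" using sets_Fl_sub by auto
  then show "(\<lambda>x. x) -` A \<inter> space M \<in> sets M" by (simp add: Int_absorb2 sets.sets_into_space)
qed simp

lemma f_joint0:
  assumes i: "i < N"
  shows "(\<lambda>(u, \<omega>). indicator {0..T} u * f i u \<omega>) \<in> borel_measurable (borel \<Otimes>\<^sub>M M)"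
proof -
  define cl where "cl u = max 0 (min u T)" for u :: real
  have pr: "(\<lambda>(u, \<omega>). f i u \<omega>) \<in> borel_measurable (restrict_space borel {0..T} \<Otimes>\<^sub>M Fl T)"
    using prog i Tpos unfolding progressive_def by auto
  have m1: "(\<lambda>x. (cl (fst x), snd x)) \<in> measurable (borel \<Otimes>\<^sub>M M) (restrict_space borel {0..T} \<Otimes>\<^sub>M Fl T)"
  proof (rule measurable_Pair)
    have "(\<lambda>x. cl (fst x)) \<in> measurable (borel \<Otimes>\<^sub>M M) borel" unfolding cl_def by measurable
    then show "(\<lambda>x. cl (fst x)) \<in> measurable (borel \<Otimes>\<^sub>M M) (restrict_space borel {0..T})"
      by (intro measurable_restrict_space2) (auto simp: cl_def Tpos less_imp_le)
    show "(\<lambda>x. snd x) \<in> measurable (borel \<Otimes>\<^sub>M M) (Fl T)"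
      using measurable_comp[OF measurable_snd id_M_Fl[of T]] by (simp add: comp_def)
  qed
  have "(\<lambda>x. (\<lambda>(u, \<omega>). f i u \<omega>) ((\<lambda>x. (cl (fst x), snd x)) x)) \<in> borel_measurable (borel \<Otimes>\<^sub>M M)"
    using measurable_comp[OF m1 pr] by (simp add: comp_def)
  then have "(\<lambda>(u, \<omega>). f i (cl u) \<omega>) \<in> borel_measurable (borel \<Otimes>\<^sub>M M)"
    by (simp add: case_prod_beta)
  then have "(\<lambda>(u, \<omega>). indicator {0..T} u * f i (cl u) \<omega>) \<in> borel_measurable (borel \<Otimes>\<^sub>M M)"
    by (simp add: case_prod_beta) measurable
  moreover have "(\<lambda>(u, \<omega>). indicator {0..T} u * f i (cl u) \<omega>) = (\<lambda>(u, \<omega>). indicator {0..T} u * f i u \<omega>)"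
    by (auto simp: cl_def indicator_def fun_eq_iff)
  ultimately show ?thesis by simp
qed

lemma f_joint:
  assumes i: "i < N" and ab: "0 \<le> a" "b \<le> T"
  shows "(\<lambda>(\<omega>, u). indicator {a..b} u * f i u \<omega>) \<in> borel_measurable (M \<Otimes>\<^sub>M lborel)"
proof -
  have "(\<lambda>(u, \<omega>). indicator {a..b} u * (indicator {0..T} u * f i u \<omega>)) \<in> borel_measurable (borel \<Otimes>\<^sub>M M)"
    using f_joint0[OF i] by (simp add: case_prod_beta) measurable
  moreover have "(\<lambda>(u, \<omega>). indicator {a..b} u * (indicator {0..T} u * f i u \<omega>)) = (\<lambda>(u, \<omega>). indicator {a..b} u * f i u \<omega>)"
    using ab by (auto simp: indicator_def fun_eq_iff)
  ultimately have "(\<lambda>(u, \<omega>). indicator {a..b} u * f i u \<omega>) \<in> borel_measurable (lborel \<Otimes>\<^sub>M M)"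
    by (simp cong: measurable_cong_sets)
  then show ?thesis by (subst measurable_pair_swap_iff) simp
qed

definition F2 :: "nat \<Rightarrow> 'a \<Rightarrow> ennreal" where
  "F2 i \<omega> = (\<integral>\<^sup>+u. ennreal ((indicator {0..T} u * f i u \<omega>)\<^sup>2) \<partial>lborel)"

lemma F2_eq: "F2 i \<omega> = (\<integral>\<^sup>+u\<in>{0..T}. ennreal ((f i u \<omega>)\<^sup>2) \<partial>lborel)"
  unfolding F2_def by (rule nn_integral_cong) (auto simp: indicator_def)

lemma F2_meas: "i < N \<Longrightarrow> F2 i \<in> borel_measurable M"
proof -
  assume i: "i < N"
  have "(\<lambda>(\<omega>, u). indicator {0..T} u * f i u \<omega>) \<in> borel_measurable (M \<Otimes>\<^sub>M lborel)"
    using f_joint[OF i] Tpos by simp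
  then have "(\<lambda>(\<omega>, u). ennreal ((indicator {0..T} u * f i u \<omega>)\<^sup>2)) \<in> borel_measurable (M \<Otimes>\<^sub>M lborel)"
    by (simp add: case_prod_beta) measurable
  then show ?thesis unfolding F2_def
    by (rule lborel.borel_measurable_nn_integral[where f="\<lambda>\<omega> u. ennreal ((indicator {0..T} u * f i u \<omega>)\<^sup>2)", simplified])
qed

lemma F2_fin: "i < N \<Longrightarrow> (\<integral>\<^sup>+\<omega>. F2 i \<omega> \<partial>M) < \<infinity>"
  using fL2 unfolding F2_eq by auto

lemma ptbound:
  assumes "s \<in> {0..T}" "t \<in> {0..T}"
  shows "ennreal \<bar>indicator {s..t} u * x\<bar> \<le> ennreal (indicator {0..T} u) + ennreal ((indicator {0..T} u * x)\<^sup>2)"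
proof (cases "u \<in> {s..t}")
  case True
  then have u0: "u \<in> {0..T}" using assms by auto
  have x1: "\<bar>x\<bar> \<le> 1 + x\<^sup>2"
  proof (cases "\<bar>x\<bar> \<le> 1")
    case True then show ?thesis by (simp add: add_increasing2)
  next
    case False
    then have "1 * \<bar>x\<bar> \<le> \<bar>x\<bar> * \<bar>x\<bar>" by (intro mult_right_mono) auto
    then show ?thesis by (simp add: power2_eq_square abs_mult_self_eq)
  qed
  have "ennreal \<bar>x\<bar> \<le> ennreal (1 + x\<^sup>2)" using x1 by (rule ennreal_leI)
  also have "\<dots> = 1 + ennreal (x\<^sup>2)" by (simp add: ennreal_plus)
  finally show ?thesis using True u0 by simp
next
  case False then show ?thesis by simp
qed

lemma Lbound:
  assumes "s \<in> {0..T}" "t \<in> {0..T}" and i: "i < N" and om: "\<omega> \<in> space M"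
  shows "ennreal \<bar>LINT u:{s..t}|lborel. f i u \<omega>\<bar> \<le> ennreal T + F2 i \<omega>"
proof (cases "integrable lborel (\<lambda>u. indicator {s..t} u * f i u \<omega>)")
  case True
  have m: "(\<lambda>u. indicator {0..T} u * f i u \<omega>) \<in> borel_measurable lborel" if "\<omega> \<in> space M"
    using measurable_Pair2[OF f_joint[OF i, of 0 T] that] Tpos by simp
  have "ennreal \<bar>LINT u:{s..t}|lborel. f i u \<omega>\<bar> \<le> (\<integral>\<^sup>+u. ennreal \<bar>indicator {s..t} u * f i u \<omega>\<bar> \<partial>lborel)"
    unfolding set_lebesgue_integral_def using integral_norm_bound_ennreal[OF True] by simp
  also have "\<dots> \<le> (\<integral>\<^sup>+u. ennreal (indicator {0..T} u) + ennreal ((indicator {0..T} u * f i u \<omega>)\<^sup>2) \<partial>lborel)"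
    by (rule nn_integral_mono) (rule ptbound[OF assms(1,2)])
  also have "\<dots> = ennreal T + F2 i \<omega>"
  proof -
    have "(\<integral>\<^sup>+u. ennreal (indicator {0..T} u) \<partial>lborel) = ennreal T"
      using Tpos by (simp add: ennreal_indicator)
    then show ?thesis unfolding F2_def
      by (subst nn_integral_add) (use m[OF om] Tpos in auto)
  qed
  finally show ?thesis .
next
  case False
  then have "(LINT u:{s..t}|lborel. f i u \<omega>) = 0"
    unfolding set_lebesgue_integral_def by (simp add: not_integrable_integral_eq)
  then show ?thesis by simp
qed

end


context bsde_f begin

interpretation P: prob_space M by (rule PS)

lemma L_meas:
  assumes i: "i < N" and st: "0 \<le> s" "t \<le> T"
  shows "(\<lambda>\<omega>. LINT u:{s..t}|lborel. f i u \<omega>) \<in> borel_measurable M"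
  unfolding set_lebesgue_integral_def
  using lborel.borel_measurable_lebesgue_integral[where f="\<lambda>\<omega> u. indicator {s..t} u *\<^sub>R f i u \<omega>" and N=M]
    f_joint[OF i st] by (simp add: case_prod_beta)

lemma L_int:
  assumes i: "i < N" and st: "0 \<le> s" "s \<le> T" "0 \<le> t" "t \<le> T"
  shows "integrable M (\<lambda>\<omega>. LINT u:{s..t}|lborel. f i u \<omega>)"
proof (rule integrableI_bounded)
  show "(\<lambda>\<omega>. LINT u:{s..t}|lborel. f i u \<omega>) \<in> borel_measurable M" using L_meas i st by simp
  have "(\<integral>\<^sup>+\<omega>. ennreal (norm (LINT u:{s..t}|lborel. f i u \<omega>)) \<partial>M) \<le> (\<integral>\<^sup>+\<omega>. ennreal T + F2 i \<omega> \<partial>M)"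
    by (rule nn_integral_mono) (use Lbound st i in auto)
  also have "\<dots> = ennreal T + (\<integral>\<^sup>+\<omega>. F2 i \<omega> \<partial>M)"
    using F2_meas[OF i] by (subst nn_integral_add) (auto simp: P.emeasure_space_1)
  also have "\<dots> < \<infinity>" using F2_fin[OF i] by (simp add: ennreal_add_less_top)
  finally show "(\<integral>\<^sup>+\<omega>. ennreal (norm (LINT u:{s..t}|lborel. f i u \<omega>)) \<partial>M) < \<infinity>" .
qed

lemma f_AE_int:
  assumes i: "i < N"
  shows "AE \<omega> in M. set_integrable lborel {0..T} (\<lambda>u. f i u \<omega>)"
proof -
  have "AE \<omega> in M. F2 i \<omega> \<noteq> \<infinity>"
    using F2_meas[OF i] F2_fin[OF i] by (intro nn_integral_PInf_AE) auto
  then show ?thesis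
  proof (rule AE_mp, intro AE_I2 impI)
    fix \<omega> assume om: "\<omega> \<in> space M" and fin: "F2 i \<omega> \<noteq> \<infinity>"
    have m: "(\<lambda>u. indicator {0..T} u * f i u \<omega>) \<in> borel_measurable lborel"
      using measurable_Pair2[OF f_joint[OF i, of 0 T] om] Tpos by simp
    have "(\<integral>\<^sup>+u. ennreal (norm (indicator {0..T} u * f i u \<omega>)) \<partial>lborel)
        \<le> (\<integral>\<^sup>+u. ennreal (indicator {0..T} u) + ennreal ((indicator {0..T} u * f i u \<omega>)\<^sup>2) \<partial>lborel)"
      by (rule nn_integral_mono) (use ptbound[of 0 T] Tpos in auto)
    also have "\<dots> = ennreal T + F2 i \<omega>"
    proof -
      have "(\<integral>\<^sup>+u. ennreal (indicator {0..T} u) \<partial>lborel) = ennreal T"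
        using Tpos by (simp add: ennreal_indicator)
      then show ?thesis unfolding F2_def
        by (subst nn_integral_add) (use m Tpos in auto)
    qed
    also have "\<dots> < \<infinity>" using fin by (simp add: ennreal_add_less_top less_top)
    finally have "integrable lborel (\<lambda>u. indicator {0..T} u * f i u \<omega>)"
      using m by (intro integrableI_bounded) auto
    then show "set_integrable lborel {0..T} (\<lambda>u. f i u \<omega>)"
      unfolding set_integrable_def by simp
  qed
qed

lemma L_split:
  fixes g :: "real \<Rightarrow> real"
  assumes si: "set_integrable lborel {0..T} g" and st: "0 \<le> s" "s \<le> t" "t \<le> T"
  shows "(LINT u:{s..T}|lborel. g u) - (LINT u:{t..T}|lborel. g u) = (LINT u:{s..t}|lborel. g u)"
proof -
  have "(LINT u:{s..t} \<union> {t..T}|lborel. g u) = (LINT u:{s..t}|lborel. g u) + (LINT u:{t..T}|lborel. g u)"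
  proof (rule Set_Integral.set_integral_Un_AE)
    show "AE x in lborel. \<not> (x \<in> {s..t} \<and> x \<in> {t..T})"
      using AE_lborel_singleton[of t] by (rule AE_mp) (auto intro!: AE_I2)
    show "set_integrable lborel {s..t} g" using set_integrable_subset[OF si] st by auto
    show "set_integrable lborel {t..T} g" using set_integrable_subset[OF si] st by auto
  qed auto
  moreover have "{s..t} \<union> {t..T} = {s..T}" using st by auto
  ultimately show ?thesis by simp
qed

end


context bsde begin
interpretation P: prob_space M by (rule PS)

lemma ae_le_from_int:
  fixes g1 g2 :: "'a \<Rightarrow> real"
  assumes s: "s \<le> T" and fm: "g1 \<in> borel_measurable (Fl s)" and gm: "g2 \<in> borel_measurable (Fl s)"
    and fi: "integrable M g1" and gi: "integrable M g2"
    and le: "\<And>A. A \<in> sets (Fl s) \<Longrightarrow> (\<integral>\<omega>. indicator A \<omega> * g1 \<omega> \<partial>M) \<le> (\<integral>\<omega>. indicator A \<omega> * g2 \<omega> \<partial>M)"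
  shows "AE \<omega> in M. g1 \<omega> \<le> g2 \<omega>"
proof -
  define A where "A = {\<omega> \<in> space M. g2 \<omega> < g1 \<omega>}"
  have "{\<omega> \<in> space (Fl s). g2 \<omega> < g1 \<omega>} \<in> sets (Fl s)" using fm gm by measurable
  then have AF: "A \<in> sets (Fl s)" unfolding A_def by simp
  have AM: "A \<in> sets M" using AF sets_Fl_sub s by auto
  have i1: "integrable M (\<lambda>\<omega>. indicator A \<omega> * g1 \<omega>)" using integrable_mult_indicator[OF AM fi] by simp
  have i2: "integrable M (\<lambda>\<omega>. indicator A \<omega> * g2 \<omega>)" using integrable_mult_indicator[OF AM gi] by simp
  have nn: "\<And>\<omega>. 0 \<le> indicator A \<omega> * (g1 \<omega> - g2 \<omega>)" unfolding A_def by (auto simp: indicator_def)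
  have "(\<integral>\<omega>. indicator A \<omega> * (g1 \<omega> - g2 \<omega>) \<partial>M) = (\<integral>\<omega>. indicator A \<omega> * g1 \<omega> \<partial>M) - (\<integral>\<omega>. indicator A \<omega> * g2 \<omega> \<partial>M)"
    using i1 i2 by (simp add: right_diff_distrib)
  also have "\<dots> \<le> 0" using le[OF AF] by simp
  finally have "(\<integral>\<omega>. indicator A \<omega> * (g1 \<omega> - g2 \<omega>) \<partial>M) = 0"
    using nn by (simp add: Bochner_Integration.integral_nonneg antisym)
  then have "AE \<omega> in M. indicator A \<omega> * (g1 \<omega> - g2 \<omega>) = 0"
    using i1 i2 nn by (subst (asm) integral_nonneg_eq_0_iff_AE) (auto simp: right_diff_distrib)
  then show ?thesis
    by (rule AE_mp) (intro AE_I2, auto simp: A_def indicator_def)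
qed

lemma ae_eq_from_int:
  fixes g1 g2 :: "'a \<Rightarrow> real"
  assumes s: "s \<le> T" and fm: "g1 \<in> borel_measurable (Fl s)" and gm: "g2 \<in> borel_measurable (Fl s)"
    and fi: "integrable M g1" and gi: "integrable M g2"
    and eq: "\<And>A. A \<in> sets (Fl s) \<Longrightarrow> (\<integral>\<omega>. indicator A \<omega> * g1 \<omega> \<partial>M) = (\<integral>\<omega>. indicator A \<omega> * g2 \<omega> \<partial>M)"
  shows "AE \<omega> in M. g1 \<omega> = g2 \<omega>"
proof -
  have "AE \<omega> in M. g1 \<omega> \<le> g2 \<omega>" using ae_le_from_int[OF s fm gm fi gi] eq by simp
  moreover have "AE \<omega> in M. g2 \<omega> \<le> g1 \<omega>" using ae_le_from_int[OF s gm fm gi fi] eq by simp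
  ultimately show ?thesis by eventually_elim simp
qed

lemma cond_exp_ind:
  fixes g :: "'a \<Rightarrow> real"
  assumes s: "s \<le> T" and fi: "integrable M g" and A: "A \<in> sets (Fl s)"
  shows "(\<integral>\<omega>. indicator A \<omega> * real_cond_exp M (Fl s) g \<omega> \<partial>M) = (\<integral>\<omega>. indicator A \<omega> * g \<omega> \<partial>M)"
proof -
  interpret S: sigma_finite_subalgebra M "Fl s" using sfs[OF s] .
  show ?thesis using S.real_cond_exp_intA[OF fi A] unfolding set_lebesgue_integral_def by simp
qed

end

locale bsde_sol = bsde_f +
  fixes h :: "real \<Rightarrow> real" and Y :: "nat \<Rightarrow> real \<Rightarrow> 'a \<Rightarrow> real"
    and Z :: "nat \<Rightarrow> nat \<Rightarrow> real \<Rightarrow> 'a \<Rightarrow> real" and K :: "real \<Rightarrow> 'a \<Rightarrow> real"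
    and \<theta> :: "nat \<Rightarrow> 'a \<Rightarrow> real" and t m Mh :: real
  assumes N1: "N \<ge> 1" and hmono: "mono h" and m0: "0 < m"
    and hlip: "\<forall>x y. m * \<bar>x - y\<bar> \<le> \<bar>h x - h y\<bar> \<and> \<bar>h x - h y\<bar> \<le> Mh * \<bar>x - y\<bar>"
    and sol: "flat_solution M (aug_filt M N B) N T B h \<theta> f Y Z K"
    and t: "0 \<le> t" "t \<le> T"
begin

interpretation P: prob_space M by (rule PS)

lemma Y_props:
  assumes i: "i < N" and u: "0 \<le> u" "u \<le> T"
  shows "Y i u \<in> borel_measurable (Fl u)" "integrable M (Y i u)"
proof -
  show ym: "Y i u \<in> borel_measurable (Fl u)" using sol i u unfolding flat_solution_def adapted_def by auto
  have "(\<integral>\<^sup>+\<omega>. ennreal ((Y i u \<omega>)\<^sup>2) \<partial>M) \<le> (\<integral>\<^sup>+\<omega>. (SUP t\<in>{0..T}. ennreal ((Y i t \<omega>)\<^sup>2)) \<partial>M)"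
    by (rule nn_integral_mono) (use u in \<open>auto intro: SUP_upper\<close>)
  also have "\<dots> < \<infinity>" using sol i unfolding flat_solution_def by auto
  finally show "integrable M (Y i u)" using P.L2_integrable(1) meas_Fl_M[OF ym u(2)] by blast
qed

lemma K_props:
  assumes u: "0 \<le> u" "u \<le> T"
  shows "K u \<in> borel_measurable (Fl u)" "integrable M (K u)"
proof -
  show km: "K u \<in> borel_measurable (Fl u)" using sol u unfolding flat_solution_def adapted_def by auto
  have "(\<integral>\<^sup>+\<omega>. ennreal ((K u \<omega>)\<^sup>2) \<partial>M) \<le> (\<integral>\<^sup>+\<omega>. (SUP t\<in>{0..T}. ennreal ((K t \<omega>)\<^sup>2)) \<partial>M)"
    by (rule nn_integral_mono) (use u in \<open>auto intro: SUP_upper\<close>)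
  also have "\<dots> < \<infinity>" using sol unfolding flat_solution_def by auto
  finally show "integrable M (K u)" using P.L2_integrable(1) meas_Fl_M[OF km u(2)] by blast
qed

end


context bsde_sol begin

interpretation P: prob_space M by (rule PS)

definition Xp :: "nat \<Rightarrow> real \<Rightarrow> 'a \<Rightarrow> real" where
  "Xp i s = real_cond_exp M (Fl s) (\<lambda>\<omega>. Y i t \<omega> + (LINT u:{s..t}|lborel. f i u \<omega>))"

definition R0 :: "real \<Rightarrow> 'a \<Rightarrow> real" where
  "R0 s = real_cond_exp M (Fl s) (\<lambda>\<omega>. K t \<omega> - K s \<omega>)"

lemma lemma_A:
  assumes i: "i < N" and s: "0 \<le> s" "s \<le> t"
  shows "AE \<omega> in M. Y i s \<omega> = Xp i s \<omega> + R0 s \<omega>"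
proof -
  have sT: "s \<le> T" using s t by simp
  obtain I where ito: "\<And>j. j < N \<Longrightarrow> is_ito_integral M Fl T (B j) (Z i j) (I j)"
    and eqn: "AE \<omega> in M. \<forall>u\<in>{0..T}.
           Y i u \<omega> = \<theta> i \<omega> + (LINT u:{u..T}|lborel. f i u \<omega>)
                      - (\<Sum>j<N. I j T \<omega> - I j u \<omega>) + K T \<omega> - K u \<omega>"
    using sol i unfolding flat_solution_def by blast
  define L where "L \<omega> = (LINT u:{s..t}|lborel. f i u \<omega>)" for \<omega>
  define D where "D \<omega> = (Y i t \<omega> + L \<omega>) + (K t \<omega> - K s \<omega>) - (\<Sum>j<N. I j t \<omega> - I j s \<omega>)" for \<omega>
  have aeD: "AE \<omega> in M. Y i s \<omega> = D \<omega>"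
    using eqn f_AE_int[OF i]
  proof eventually_elim
    case (elim \<omega>)
    have e1: "Y i s \<omega> = \<theta> i \<omega> + (LINT u:{s..T}|lborel. f i u \<omega>)
                      - (\<Sum>j<N. I j T \<omega> - I j s \<omega>) + K T \<omega> - K s \<omega>"
      using elim(1) s sT by auto
    have e2: "Y i t \<omega> = \<theta> i \<omega> + (LINT u:{t..T}|lborel. f i u \<omega>)
                      - (\<Sum>j<N. I j T \<omega> - I j t \<omega>) + K T \<omega> - K t \<omega>"
      using elim(1) t by auto
    have e3: "(LINT u:{s..T}|lborel. f i u \<omega>) - (LINT u:{t..T}|lborel. f i u \<omega>) = L \<omega>"
      unfolding L_def using L_split[OF elim(2) s(1) s(2) t(2)] .
    have e4: "(\<Sum>j<N. I j T \<omega> - I j s \<omega>) - (\<Sum>j<N. I j T \<omega> - I j t \<omega>) = (\<Sum>j<N. I j t \<omega> - I j s \<omega>)"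
      by (simp add: sum_subtractf[symmetric])
    show ?case unfolding D_def using e1 e2 e3 e4 by (simp add: algebra_simps)
  qed
  have Iint: "\<And>j u. j < N \<Longrightarrow> 0 \<le> u \<Longrightarrow> u \<le> T \<Longrightarrow> integrable M (I j u)"
    using ito_props(1)[OF ito] by blast
  have Ii: "integrable M (\<lambda>\<omega>. I j t \<omega> - I j s \<omega>)" if "j < N" for j
    using Iint[OF that] s t by auto
  have Yti: "integrable M (Y i t)" using Y_props[OF i t] by simp
  have Ysi: "integrable M (Y i s)" using Y_props[OF i s(1) sT] by simp
  have Li: "integrable M L" unfolding L_def using L_int[OF i s(1) sT t] .
  have Kti: "integrable M (K t)" using K_props[OF t] by simp
  have Ksi: "integrable M (K s)" using K_props[OF s(1) sT] by simp
  have YLi: "integrable M (\<lambda>\<omega>. Y i t \<omega> + L \<omega>)" using Yti Li by auto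
  have KKi: "integrable M (\<lambda>\<omega>. K t \<omega> - K s \<omega>)" using Kti Ksi by auto
  have int_eq: "(\<integral>\<omega>. indicator A \<omega> * Y i s \<omega> \<partial>M) = (\<integral>\<omega>. indicator A \<omega> * (Xp i s \<omega> + R0 s \<omega>) \<partial>M)"
    if A: "A \<in> sets (Fl s)" for A
  proof -
    have AM: "A \<in> sets M" using A sets_Fl_sub sT by auto
    have i1: "integrable M (\<lambda>\<omega>. indicator A \<omega> * (Y i t \<omega> + L \<omega>))"
      using integrable_mult_indicator[OF AM YLi] by simp
    have i2: "integrable M (\<lambda>\<omega>. indicator A \<omega> * (K t \<omega> - K s \<omega>))"
      using integrable_mult_indicator[OF AM KKi] by simp
    have i3: "integrable M (\<lambda>\<omega>. indicator A \<omega> * (I j t \<omega> - I j s \<omega>))" if "j < N" for j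
      using integrable_mult_indicator[OF AM Ii[OF that]] by simp
    have z3: "(\<integral>\<omega>. indicator A \<omega> * (I j t \<omega> - I j s \<omega>) \<partial>M) = 0" if "j < N" for j
      using ito_props(2)[OF ito[OF that] that s(1) s(2) t(2) A] .
    have Dm: "D \<in> borel_measurable M" unfolding D_def using YLi KKi Ii by (auto intro!: borel_measurable_integrable)
    have "(\<integral>\<omega>. indicator A \<omega> * Y i s \<omega> \<partial>M) = (\<integral>\<omega>. indicator A \<omega> * D \<omega> \<partial>M)"
      using aeD Ysi Dm AM by (intro integral_cong_AE) (auto simp: borel_measurable_integrable)
    also have "\<dots> = (\<integral>\<omega>. indicator A \<omega> * (Y i t \<omega> + L \<omega>) + indicator A \<omega> * (K t \<omega> - K s \<omega>)
        - (\<Sum>j<N. indicator A \<omega> * (I j t \<omega> - I j s \<omega>)) \<partial>M)"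
      unfolding D_def by (simp add: algebra_simps sum_distrib_left)
    also have "\<dots> = (\<integral>\<omega>. indicator A \<omega> * (Y i t \<omega> + L \<omega>) \<partial>M) + (\<integral>\<omega>. indicator A \<omega> * (K t \<omega> - K s \<omega>) \<partial>M)
        - (\<Sum>j<N. \<integral>\<omega>. indicator A \<omega> * (I j t \<omega> - I j s \<omega>) \<partial>M)"
    proof -
      have isum: "integrable M (\<lambda>\<omega>. \<Sum>j<N. indicator A \<omega> * (I j t \<omega> - I j s \<omega>))"
        using i3 by (intro Bochner_Integration.integrable_sum) auto
      have s1: "(\<integral>\<omega>. (\<Sum>j<N. indicator A \<omega> * (I j t \<omega> - I j s \<omega>)) \<partial>M)
          = (\<Sum>j<N. \<integral>\<omega>. indicator A \<omega> * (I j t \<omega> - I j s \<omega>) \<partial>M)"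
        using i3 by (intro Bochner_Integration.integral_sum) auto
      have s2: "(\<integral>\<omega>. indicator A \<omega> * (Y i t \<omega> + L \<omega>) + indicator A \<omega> * (K t \<omega> - K s \<omega>) \<partial>M)
          = (\<integral>\<omega>. indicator A \<omega> * (Y i t \<omega> + L \<omega>) \<partial>M) + (\<integral>\<omega>. indicator A \<omega> * (K t \<omega> - K s \<omega>) \<partial>M)"
        by (rule Bochner_Integration.integral_add[OF i1 i2])
      have s3: "(\<integral>\<omega>. indicator A \<omega> * (Y i t \<omega> + L \<omega>) + indicator A \<omega> * (K t \<omega> - K s \<omega>)
        - (\<Sum>j<N. indicator A \<omega> * (I j t \<omega> - I j s \<omega>)) \<partial>M)
        = (\<integral>\<omega>. indicator A \<omega> * (Y i t \<omega> + L \<omega>) + indicator A \<omega> * (K t \<omega> - K s \<omega>) \<partial>M)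
        - (\<integral>\<omega>. (\<Sum>j<N. indicator A \<omega> * (I j t \<omega> - I j s \<omega>)) \<partial>M)"
        by (rule Bochner_Integration.integral_diff[OF Bochner_Integration.integrable_add[OF i1 i2] isum])
      show ?thesis unfolding s3 s2 s1 ..
    qed
    also have "\<dots> = (\<integral>\<omega>. indicator A \<omega> * (Y i t \<omega> + L \<omega>) \<partial>M) + (\<integral>\<omega>. indicator A \<omega> * (K t \<omega> - K s \<omega>) \<partial>M)"
      using z3 by simp
    also have "\<dots> = (\<integral>\<omega>. indicator A \<omega> * Xp i s \<omega> \<partial>M) + (\<integral>\<omega>. indicator A \<omega> * R0 s \<omega> \<partial>M)"
      unfolding Xp_def R0_def L_def using cond_exp_ind[OF sT _ A] YLi KKi unfolding L_def by simp
    also have "\<dots> = (\<integral>\<omega>. indicator A \<omega> * (Xp i s \<omega> + R0 s \<omega>) \<partial>M)"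
    proof -
      interpret S: sigma_finite_subalgebra M "Fl s" using sfs[OF sT] .
      have "integrable M (Xp i s)" "integrable M (R0 s)"
        unfolding Xp_def R0_def using S.real_cond_exp_int(1) YLi KKi unfolding L_def by auto
      then have "integrable M (\<lambda>\<omega>. indicator A \<omega> * Xp i s \<omega>)" "integrable M (\<lambda>\<omega>. indicator A \<omega> * R0 s \<omega>)"
        using integrable_mult_indicator[OF AM, of "Xp i s"] integrable_mult_indicator[OF AM, of "R0 s"] by simp_all
      then have "(\<integral>\<omega>. indicator A \<omega> * Xp i s \<omega> + indicator A \<omega> * R0 s \<omega> \<partial>M) =
          (\<integral>\<omega>. indicator A \<omega> * Xp i s \<omega> \<partial>M) + (\<integral>\<omega>. indicator A \<omega> * R0 s \<omega> \<partial>M)"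
        by (rule Bochner_Integration.integral_add)
      then show ?thesis by (simp add: distrib_left)
    qed
    finally show ?thesis .
  qed
  interpret S: sigma_finite_subalgebra M "Fl s" using sfs[OF sT] .
  show ?thesis
  proof (rule ae_eq_from_int[OF sT])
    show "Y i s \<in> borel_measurable (Fl s)" using Y_props[OF i s(1) sT] by simp
    show "(\<lambda>\<omega>. Xp i s \<omega> + R0 s \<omega>) \<in> borel_measurable (Fl s)" unfolding Xp_def R0_def by measurable
    show "integrable M (Y i s)" by (rule Ysi)
    show "integrable M (\<lambda>\<omega>. Xp i s \<omega> + R0 s \<omega>)"
      unfolding Xp_def R0_def using S.real_cond_exp_int(1) YLi KKi unfolding L_def by auto
  qed (rule int_eq)
qed

end


lemma h_incr:
  fixes h :: "real \<Rightarrow> real"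
  assumes hmono: "mono h" and hlip: "\<forall>x y. m * \<bar>x - y\<bar> \<le> \<bar>h x - h y\<bar> \<and> \<bar>h x - h y\<bar> \<le> Mh * \<bar>x - y\<bar>"
    and ab: "b \<le> a"
  shows "h b + m * (a - b) \<le> h a"
proof -
  have "h b \<le> h a" using hmono ab by (simp add: monoD)
  moreover have "m * \<bar>a - b\<bar> \<le> \<bar>h a - h b\<bar>" using hlip by blast
  ultimately show ?thesis using ab by simp
qed

lemma ms_props:
  fixes h :: "real \<Rightarrow> real" and x :: "nat \<Rightarrow> real"
  assumes N1: "N \<ge> 1" and hmono: "mono h" and m0: "0 < m"
    and hlip: "\<forall>x y. m * \<bar>x - y\<bar> \<le> \<bar>h x - h y\<bar> \<and> \<bar>h x - h y\<bar> \<le> Mh * \<bar>x - y\<bar>"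
  shows ms_ge0: "0 \<le> min_shift N h x"
    and ms_le: "\<And>r. 0 \<le> r \<Longrightarrow> 0 \<le> (\<Sum>i<N. h (r + x i)) \<Longrightarrow> min_shift N h x \<le> r"
    and ms_gap: "\<And>r. 0 \<le> r \<Longrightarrow> 0 \<le> (\<Sum>i<N. h (r + x i)) \<Longrightarrow>
        r - min_shift N h x \<le> (\<Sum>i<N. h (r + x i)) / (real N * m)"
proof -
  define S where "S = {y. 0 \<le> y \<and> (\<Sum>i<N. h (y + x i)) / real N \<ge> 0}"
  have Npos: "real N > 0" using N1 by simp
  have memS: "y \<in> S \<longleftrightarrow> 0 \<le> y \<and> 0 \<le> (\<Sum>i<N. h (y + x i))" for y
    unfolding S_def using Npos by (simp add: divide_nonneg_pos zero_le_divide_iff)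
  have ms: "min_shift N h x = Inf S" unfolding min_shift_def S_def ..
  have bdd: "bdd_below S" unfolding S_def by (rule bdd_belowI[of _ 0]) auto
  have ne: "S \<noteq> {}"
  proof -
    define y where "y = max 0 (- (\<Sum>i<N. h (x i)) / (real N * m))"
    have y0: "0 \<le> y" unfolding y_def by simp
    have "(\<Sum>i<N. h (x i) + m * y) \<le> (\<Sum>i<N. h (y + x i))"
    proof (rule sum_mono)
      fix i
      have "h (x i) + m * ((y + x i) - x i) \<le> h (y + x i)"
        by (rule h_incr[OF hmono hlip]) (use y0 in simp)
      then show "h (x i) + m * y \<le> h (y + x i)" by simp
    qed
    moreover have "(\<Sum>i<N. h (x i) + m * y) = (\<Sum>i<N. h (x i)) + real N * m * y"
      by (simp add: sum.distrib)
    moreover have "0 \<le> (\<Sum>i<N. h (x i)) + real N * m * y"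
    proof -
      have c: "real N * m > 0" using Npos m0 by simp
      have "- (\<Sum>i<N. h (x i)) / (real N * m) \<le> y" unfolding y_def by (rule max.cobounded2)
      then have "- (\<Sum>i<N. h (x i)) \<le> y * (real N * m)" using pos_divide_le_eq[OF c] by blast
      then show ?thesis by (simp add: algebra_simps)
    qed
    ultimately have "y \<in> S" using y0 memS by simp
    then show ?thesis by auto
  qed
  show "0 \<le> min_shift N h x" unfolding ms using ne by (rule cInf_greatest) (auto simp: S_def)
  show "min_shift N h x \<le> r" if "0 \<le> r" "0 \<le> (\<Sum>i<N. h (r + x i))" for r
    unfolding ms using that by (intro cInf_lower bdd) (simp add: memS)
  show "r - min_shift N h x \<le> (\<Sum>i<N. h (r + x i)) / (real N * m)"
    if r: "0 \<le> r" "0 \<le> (\<Sum>i<N. h (r + x i))" for r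
  proof -
    define G where "G = (\<Sum>i<N. h (r + x i)) / (real N * m)"
    have G0: "0 \<le> G" unfolding G_def using r Npos m0 by simp
    have "r - G \<le> Inf S"
    proof (rule cInf_greatest[OF ne])
      fix y assume "y \<in> S"
      then have y: "0 \<le> y" "0 \<le> (\<Sum>i<N. h (y + x i))" using memS by auto
      show "r - G \<le> y"
      proof (cases "y \<le> r")
        case True
        have "(\<Sum>i<N. h (y + x i) + m * (r - y)) \<le> (\<Sum>i<N. h (r + x i))"
        proof (rule sum_mono)
          fix i
          have "h (y + x i) + m * ((r + x i) - (y + x i)) \<le> h (r + x i)"
            by (rule h_incr[OF hmono hlip]) (use True in simp)
          then show "h (y + x i) + m * (r - y) \<le> h (r + x i)" by simp
        qed
        then have "(\<Sum>i<N. h (y + x i)) + real N * m * (r - y) \<le> (\<Sum>i<N. h (r + x i))"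
          by (simp add: sum.distrib)
        then have "real N * m * (r - y) \<le> (\<Sum>i<N. h (r + x i))" using y by simp
        then have "r - y \<le> G" unfolding G_def using Npos m0 by (simp add: le_divide_eq mult.commute mult.left_commute)
        then show ?thesis by simp
      next
        case False then show ?thesis using G0 by simp
      qed
    qed
    then show ?thesis unfolding ms G_def by simp
  qed
qed

context bsde_sol begin

interpretation P: prob_space M by (rule PS)

lemma K_mono: "\<omega> \<in> space M \<Longrightarrow> 0 \<le> a \<Longrightarrow> a \<le> b \<Longrightarrow> b \<le> T \<Longrightarrow> K a \<omega> \<le> K b \<omega>"
  using sol unfolding flat_solution_def mono_on_def by auto

lemma R0_props:
  assumes s: "0 \<le> s" "s \<le> t"
  shows "R0 s \<in> borel_measurable (Fl s)" "integrable M (R0 s)" "AE \<omega> in M. 0 \<le> R0 s \<omega>"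
    "integrable M (\<lambda>\<omega>. K t \<omega> - K s \<omega>)"
proof -
  have sT: "s \<le> T" using s t by simp
  interpret S: sigma_finite_subalgebra M "Fl s" using sfs[OF sT] .
  show "R0 s \<in> borel_measurable (Fl s)" unfolding R0_def by simp
  show KKi: "integrable M (\<lambda>\<omega>. K t \<omega> - K s \<omega>)" using K_props[OF t] K_props[OF s(1) sT] by auto
  then show "integrable M (R0 s)" unfolding R0_def by (rule S.real_cond_exp_int(1))
  show "AE \<omega> in M. 0 \<le> R0 s \<omega>" unfolding R0_def
    by (rule S.real_cond_exp_pos) (use K_mono s t KKi in \<open>auto simp: borel_measurable_integrable\<close>)
qed

lemma lemma_B: "supermart M Fl t R0"
  unfolding supermart_def
proof (intro conjI allI impI ballI)
  show "adapted Fl t R0" unfolding adapted_def using R0_props by auto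
  show "integrable M (R0 s)" if "s \<in> {0..t}" for s using R0_props that by auto
  fix s u assume su: "0 \<le> s" "s \<le> u" "u \<le> t"
  have sT: "s \<le> T" and uT: "u \<le> T" using su t by auto
  interpret S: sigma_finite_subalgebra M "Fl s" using sfs[OF sT] .
  have Ri: "integrable M (R0 u)" using R0_props su by auto
  show "AE \<omega> in M. real_cond_exp M (Fl s) (R0 u) \<omega> \<le> R0 s \<omega>"
  proof (rule ae_le_from_int[OF sT])
    show "real_cond_exp M (Fl s) (R0 u) \<in> borel_measurable (Fl s)" by simp
    show "R0 s \<in> borel_measurable (Fl s)" using R0_props su by auto
    show "integrable M (real_cond_exp M (Fl s) (R0 u))" using S.real_cond_exp_int(1)[OF Ri] .
    show "integrable M (R0 s)" using R0_props su by auto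
    fix A assume A: "A \<in> sets (Fl s)"
    have Au: "A \<in> sets (Fl u)" using A sets_Fl_mono su uT by auto
    have AM: "A \<in> sets M" using A sets_Fl_sub sT by auto
    have "(\<integral>\<omega>. indicator A \<omega> * real_cond_exp M (Fl s) (R0 u) \<omega> \<partial>M) = (\<integral>\<omega>. indicator A \<omega> * R0 u \<omega> \<partial>M)"
      by (rule cond_exp_ind[OF sT Ri A])
    also have "\<dots> = (\<integral>\<omega>. indicator A \<omega> * (K t \<omega> - K u \<omega>) \<partial>M)"
      unfolding R0_def by (rule cond_exp_ind[OF uT _ Au]) (use R0_props su in auto)
    also have "\<dots> \<le> (\<integral>\<omega>. indicator A \<omega> * (K t \<omega> - K s \<omega>) \<partial>M)"
    proof (rule integral_mono)
      show "integrable M (\<lambda>\<omega>. indicator A \<omega> * (K t \<omega> - K u \<omega>))"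
        using integrable_mult_indicator[OF AM, of "\<lambda>\<omega>. K t \<omega> - K u \<omega>"] R0_props(4)[of u] su by simp
      show "integrable M (\<lambda>\<omega>. indicator A \<omega> * (K t \<omega> - K s \<omega>))"
        using integrable_mult_indicator[OF AM, of "\<lambda>\<omega>. K t \<omega> - K s \<omega>"] R0_props(4)[of s] su by simp
      fix \<omega> assume "\<omega> \<in> space M"
      then have "K s \<omega> \<le> K u \<omega>" using K_mono su uT by auto
      then show "indicator A \<omega> * (K t \<omega> - K u \<omega>) \<le> indicator A \<omega> * (K t \<omega> - K s \<omega>)"
        by (auto simp: indicator_def)
    qed
    also have "\<dots> = (\<integral>\<omega>. indicator A \<omega> * R0 s \<omega> \<partial>M)"
      unfolding R0_def by (rule cond_exp_ind[OF sT _ A, symmetric]) (use R0_props su in auto)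
    finally show "(\<integral>\<omega>. indicator A \<omega> * real_cond_exp M (Fl s) (R0 u) \<omega> \<partial>M) \<le> (\<integral>\<omega>. indicator A \<omega> * R0 s \<omega> \<partial>M)" .
  qed
qed

definition phi :: "real \<Rightarrow> 'a \<Rightarrow> real" where
  "phi s \<omega> = min_shift N h (\<lambda>i. Xp i s \<omega>)"

lemma constr: "AE \<omega> in M. \<forall>u\<in>{0..T}. (\<Sum>i<N. h (Y i u \<omega>)) / real N \<ge> 0"
  using sol unfolding flat_solution_def by blast

lemma constr': "AE \<omega> in M. \<forall>u\<in>{0..T}. (\<Sum>i<N. h (Y i u \<omega>)) \<ge> 0"
  using constr by eventually_elim (use N1 in \<open>auto simp: zero_le_divide_iff\<close>)

lemma lemma_A_all:
  assumes s: "0 \<le> s" "s \<le> t"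
  shows "AE \<omega> in M. \<forall>i<N. Y i s \<omega> = Xp i s \<omega> + R0 s \<omega>"
proof -
  have "\<forall>i\<in>{..<N}. AE \<omega> in M. Y i s \<omega> = Xp i s \<omega> + R0 s \<omega>" using lemma_A s by auto
  then have "AE \<omega> in M. \<forall>i\<in>{..<N}. Y i s \<omega> = Xp i s \<omega> + R0 s \<omega>"
    by (subst AE_finite_all) auto
  then show ?thesis by auto
qed

lemma lemma_C:
  assumes s: "0 \<le> s" "s \<le> t"
  shows "AE \<omega> in M. phi s \<omega> \<le> R0 s \<omega>"
  using lemma_A_all[OF s] constr' R0_props(3)[OF s]
proof eventually_elim
  case (elim \<omega>)
  have sT: "s \<in> {0..T}" using s t by auto
  have "(\<Sum>i<N. h (R0 s \<omega> + Xp i s \<omega>)) = (\<Sum>i<N. h (Y i s \<omega>))"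
    using elim(1) by (intro sum.cong) (auto simp: add.commute)
  then have "0 \<le> (\<Sum>i<N. h (R0 s \<omega> + Xp i s \<omega>))" using elim(2) sT by auto
  then show ?case unfolding phi_def using ms_le[OF N1 hmono m0 hlip elim(3)] by simp
qed

end


lemma flat_lemma:
  fixes k g :: "real \<Rightarrow> real" and T a b :: real
  assumes kc: "continuous_on {0..T} k" and km: "mono_on {0..T} k"
    and gc: "continuous_on {0..T} g" and g0: "\<forall>u\<in>{0..T}. 0 \<le> g u"
    and sk: "(LINT u:{0..T}|interval_measure (\<lambda>u. k (max 0 (min u T))). g u) = 0"
    and ab: "0 \<le> a" "a \<le> b" "b \<le> T" and pos: "\<forall>v\<in>{a..b}. 0 < g v"
  shows "k b = k a"
proof -
  define F where "F u = k (max 0 (min u T))" for u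
  have T0: "0 \<le> T" using ab by simp
  have Fmono: "F x \<le> F y" if "x \<le> y" for x y
    unfolding F_def by (rule mono_onD[OF km]) (use that T0 in \<open>auto simp: max_def min_def\<close>)
  have "continuous_on UNIV F"
    unfolding F_def
  proof (rule continuous_on_compose2[OF kc])
    show "continuous_on UNIV (\<lambda>u. max 0 (min u T))" by (intro continuous_intros)
    show "(\<lambda>u. max 0 (min u T)) ` UNIV \<subseteq> {0..T}" using T0 by auto
  qed
  then have Fc: "continuous (at x) F" for x
    by (simp add: continuous_on_eq_continuous_at)
  have Fr: "continuous (at_right x) F" for x
    using Fc continuous_at_imp_continuous_at_within by blast
  define \<mu> where "\<mu> = interval_measure F"
  have sets_mu[simp]: "sets \<mu> = sets borel" unfolding \<mu>_def by simp
  have Ioc: "emeasure \<mu> {x<..y} = ennreal (F y - F x)" if "x \<le> y" for x y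
    unfolding \<mu>_def using emeasure_interval_measure_Ioc[OF that] Fmono Fr by blast
  obtain x0 where x0: "x0 \<in> {a..b}" "\<forall>y\<in>{a..b}. g x0 \<le> g y"
    using continuous_attains_inf[of "{a..b}" g] ab continuous_on_subset[OF gc] by auto
  define c where "c = g x0"
  have c0: "0 < c" unfolding c_def using pos x0 by auto
  have "compact (g ` {0..T})" using compact_continuous_image[OF gc] by simp
  then obtain C where C: "C > 0" "\<forall>y\<in>g ` {0..T}. norm y \<le> C"
    using compact_imp_bounded bounded_pos by metis
  have fin1: "emeasure \<mu> {a<..b} < \<infinity>" using Ioc[OF ab(2)] by simp
  have fin2: "emeasure \<mu> {-1<..T} < \<infinity>" using Ioc[of "-1" T] T0 by simp
  have i1: "integrable \<mu> (\<lambda>u. c * indicator {a<..b} u)"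
    using fin1 by (intro integrable_mult_right) auto
  have m2: "(\<lambda>u. indicator {0..T} u *\<^sub>R g u) \<in> borel_measurable \<mu>"
    using borel_measurable_continuous_on_indicator[OF _ gc] by (simp cong: measurable_cong_sets)
  have i2: "integrable \<mu> (\<lambda>u. indicator {0..T} u *\<^sub>R g u)"
  proof (rule Bochner_Integration.integrable_bound[of \<mu> "\<lambda>u. C * indicator {-1<..T} u"])
    show "integrable \<mu> (\<lambda>u. C * indicator {-1<..T} u)"
      using fin2 by (intro integrable_mult_right) auto
    show "(\<lambda>u. indicator {0..T} u *\<^sub>R g u) \<in> borel_measurable \<mu>" by (rule m2)
    show "AE x in \<mu>. norm (indicator {0..T} x *\<^sub>R g x) \<le> norm (C * indicator {- 1<..T} x)"
      using C by (intro AE_I2) (auto simp: indicator_def)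
  qed
  have "(\<integral>u. c * indicator {a<..b} u \<partial>\<mu>) \<le> (\<integral>u. indicator {0..T} u *\<^sub>R g u \<partial>\<mu>)"
  proof (rule integral_mono[OF i1 i2])
    fix u
    show "c * indicator {a<..b} u \<le> indicator {0..T} u *\<^sub>R g u"
    proof (cases "u \<in> {a<..b}")
      case True
      then have "u \<in> {a..b}" "u \<in> {0..T}" using ab by auto
      then show ?thesis using True x0 unfolding c_def by auto
    next
      case False
      have "0 \<le> indicator {0..T} u *\<^sub>R g u"
      proof (cases "u \<in> {a..b}")
        case True then show ?thesis using pos ab by (auto simp: indicator_def less_imp_le)
      next
        case False
        show ?thesis
        proof (cases "u \<in> {0..T}")
          case True
          show ?thesis using g0 True by simp
        qed simp
      qed
      then show ?thesis using False by simp
    qed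
  qed
  moreover have "(\<integral>u. c * indicator {a<..b} u \<partial>\<mu>) = c * (k b - k a)"
  proof -
    have "measure \<mu> {a<..b} = F b - F a"
      unfolding measure_def using Ioc[OF ab(2)] Fmono[OF ab(2)] by simp
    moreover have "F b = k b" "F a = k a" unfolding F_def using ab by (auto simp: max_def min_def)
    ultimately show ?thesis using fin1 by simp
  qed
  moreover have "(\<integral>u. indicator {0..T} u *\<^sub>R g u \<partial>\<mu>) = 0"
    using sk unfolding set_lebesgue_integral_def \<mu>_def F_def .
  ultimately have "c * (k b - k a) \<le> 0" using c0 by auto
  then have "k b \<le> k a" using c0 by (simp add: mult_le_0_iff)
  moreover have "k a \<le> k b" using mono_onD[OF km] ab by auto
  ultimately show ?thesis by simp
qed



definition grid :: "real \<Rightarrow> real \<Rightarrow> nat \<Rightarrow> nat \<Rightarrow> real" where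
  "grid s t n j = s + real j * (t - s) / real n"

definition stidx :: "(real \<Rightarrow> real) \<Rightarrow> real \<Rightarrow> real \<Rightarrow> real \<Rightarrow> nat \<Rightarrow> nat" where
  "stidx G d s t n = (LEAST j. j = n \<or> G (grid s t n j) \<le> d)"

lemma stidx_le: "stidx G d s t n \<le> n"
  unfolding stidx_def by (rule Least_le) simp

lemma grid_mono: "s \<le> t \<Longrightarrow> i \<le> j \<Longrightarrow> grid s t n i \<le> grid s t n j"
  unfolding grid_def by (auto intro!: divide_right_mono mult_right_mono)

lemma grid_range: "s \<le> t \<Longrightarrow> j \<le> n \<Longrightarrow> grid s t n j \<in> {s..t}"
proof -
  assume st: "s \<le> t" and jn: "j \<le> n"
  have "s \<le> grid s t n j" unfolding grid_def using st by simp
  moreover have "grid s t n j \<le> t"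
  proof (cases "n = 0")
    case True then show ?thesis unfolding grid_def using st by simp
  next
    case False
    have "real j * (t - s) \<le> real n * (t - s)" using jn st by (intro mult_right_mono) auto
    then have "real j * (t - s) / real n \<le> t - s" using False by (simp add: divide_le_eq mult.commute)
    then show ?thesis unfolding grid_def by simp
  qed
  ultimately show ?thesis by simp
qed

lemma grid_0[simp]: "grid s t n 0 = s" unfolding grid_def by simp
lemma grid_n: "n \<ge> 1 \<Longrightarrow> grid s t n n = t" unfolding grid_def by simp

lemma path_conv:
  fixes k G :: "real \<Rightarrow> real" and s t d :: real
  assumes st: "s \<le> t" and kc: "continuous_on {s..t} k" and km: "mono_on {s..t} k"
    and Gc: "continuous_on {s..t} G" and d: "0 < d"
    and flat: "\<And>a b. s \<le> a \<Longrightarrow> a \<le> b \<Longrightarrow> b \<le> t \<Longrightarrow> (\<forall>v\<in>{a..b}. 0 < G v) \<Longrightarrow> k b = k a"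
  shows "(\<lambda>n. k (grid s t n (stidx G d s t n))) \<longlonglongrightarrow> k s"
proof -
  define \<tau> where "\<tau> n = grid s t n (stidx G d s t n)" for n
  have \<tau>r: "\<tau> n \<in> {s..t}" for n unfolding \<tau>_def using grid_range[OF st stidx_le] .
  have klow: "k s \<le> k (\<tau> n)" for n using mono_onD[OF km] \<tau>r[of n] st by auto
  show ?thesis unfolding \<tau>_def[symmetric]
  proof (cases "\<forall>v\<in>{s..t}. 0 < G v")
    case True
    have kt: "k t = k s" using flat[OF order.refl st order.refl] True by auto
    have "k (\<tau> n) = k s" for n
    proof -
      have "k (\<tau> n) \<le> k t" using mono_onD[OF km] \<tau>r[of n] st by auto
      then show ?thesis using klow[of n] kt by simp
    qed
    then show "(\<lambda>n. k (\<tau> n)) \<longlonglongrightarrow> k s" by simp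
  next
    case False
    define Z where "Z = {s..t} \<inter> G -` {..0}"
    have Zne: "Z \<noteq> {}" using False unfolding Z_def by (auto simp: not_less)
    have Zbdd: "bdd_below Z" unfolding Z_def by (rule bdd_belowI[of _ s]) auto
    have Zcl: "closed Z" unfolding Z_def by (rule continuous_closed_preimage[OF Gc]) auto
    define z where "z = Inf Z"
    have zZ: "z \<in> Z" unfolding z_def using closed_contains_Inf[OF Zne Zbdd Zcl] .
    then have zr: "z \<in> {s..t}" and Gz: "G z \<le> 0" unfolding Z_def by auto
    have below: "0 < G w" if "w \<in> {s..t}" "w < z" for w
    proof (rule ccontr)
      assume "\<not> 0 < G w"
      then have "w \<in> Z" using that unfolding Z_def by auto
      then have "z \<le> w" unfolding z_def by (rule cInf_lower[OF _ Zbdd])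
      then show False using that by simp
    qed
    have kz: "k z = k s"
    proof (cases "z = s")
      case True then show ?thesis by simp
    next
      case False
      then have sz: "s < z" using zr by simp
      define Q where "Q = {s..t} \<inter> k -` {..k s}"
      have Qcl: "closed Q" unfolding Q_def by (rule continuous_closed_preimage[OF kc]) auto
      have "{s..<z} \<subseteq> Q"
      proof
        fix v assume v: "v \<in> {s..<z}"
        have "k v = k s"
          by (rule flat) (use v zr below in auto)
        then show "v \<in> Q" unfolding Q_def using v zr by auto
      qed
      then have "closure {s..<z} \<subseteq> Q" using Qcl closure_minimal by blast
      then have "z \<in> Q" using sz by auto
      then have "k z \<le> k s" unfolding Q_def by simp
      moreover have "k s \<le> k z" using mono_onD[OF km] zr by auto
      ultimately show ?thesis by simp
    qed
    show "(\<lambda>n. k (\<tau> n)) \<longlonglongrightarrow> k s"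
      unfolding lim_sequentially
    proof (intro allI impI)
      fix \<eta> :: real assume \<eta>: "0 < \<eta>"
      obtain d1 where d1: "d1 > 0" "\<forall>x'\<in>{s..t}. dist x' z < d1 \<longrightarrow> dist (k x') (k z) < \<eta>"
        using kc zr \<eta> unfolding continuous_on_iff by blast
      obtain d2 where d2: "d2 > 0" "\<forall>x'\<in>{s..t}. dist x' z < d2 \<longrightarrow> dist (G x') (G z) < d"
        using Gc zr d unfolding continuous_on_iff by blast
      obtain no :: nat where no: "(t - s) / min d1 d2 < real no"
        using reals_Archimedean2 by blast
      have md: "0 < min d1 d2" using d1 d2 by simp
      show "\<exists>no. \<forall>n\<ge>no. dist (k (\<tau> n)) (k s) < \<eta>"
      proof (intro exI[of _ "Suc no"] allI impI)
        fix n assume n: "Suc no \<le> n"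
        then have n1: "n \<ge> 1" and npos: "real n > 0" by auto
        have mesh: "(t - s) / real n < min d1 d2"
        proof -
          have "(t - s) < real no * min d1 d2" using no md by (simp add: divide_less_eq)
          also have "\<dots> \<le> real n * min d1 d2" using n md by (intro mult_right_mono) auto
          finally have "t - s < min d1 d2 * real n" by (simp add: mult.commute)
          then show ?thesis using npos by (simp only: divide_less_eq) simp
        qed
        define j0 where "j0 = (LEAST j. z \<le> grid s t n j)"
        have ex: "z \<le> grid s t n n" using grid_n[OF n1] zr by simp
        have j0n: "j0 \<le> n" unfolding j0_def by (rule Least_le) (rule ex)
        have zj0: "z \<le> grid s t n j0" unfolding j0_def by (rule LeastI[of _ n]) (rule ex)
        have close: "grid s t n j0 - z < (t - s) / real n \<or> grid s t n j0 = z"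
        proof (cases j0)
          case 0
          then show ?thesis using zj0 zr by simp
        next
          case (Suc j')
          have "\<not> z \<le> grid s t n j'" unfolding j0_def
            by (rule not_less_Least) (simp add: Suc j0_def[symmetric])
          moreover have "grid s t n j0 = grid s t n j' + (t - s) / real n"
            unfolding grid_def Suc by (simp add: add_divide_distrib[symmetric] algebra_simps)
          ultimately show ?thesis by simp
        qed
        have dz: "dist (grid s t n j0) z < min d1 d2"
          using close zj0 mesh md by (auto simp: dist_real_def)
        have gr: "grid s t n j0 \<in> {s..t}" using grid_range[OF st j0n] .
        have "dist (G (grid s t n j0)) (G z) < d" using d2 gr dz by auto
        then have "G (grid s t n j0) \<le> d" using Gz by (simp add: dist_real_def)
        then have "stidx G d s t n \<le> j0" unfolding stidx_def by (intro Least_le) simp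
        then have "\<tau> n \<le> grid s t n j0" unfolding \<tau>_def using grid_mono[OF st] by simp
        then have "k (\<tau> n) \<le> k (grid s t n j0)" using mono_onD[OF km] \<tau>r[of n] gr by auto
        moreover have "dist (k (grid s t n j0)) (k z) < \<eta>" using d1 gr dz by auto
        ultimately have "k (\<tau> n) < k s + \<eta>" using kz by (simp add: dist_real_def)
        then show "dist (k (\<tau> n)) (k s) < \<eta>" using klow[of n] by (simp add: dist_real_def)
      qed
    qed
  qed
qed



lemma (in prob_space) opt_sampling:
  fixes Sj :: "nat \<Rightarrow> 'a \<Rightarrow> real" and C :: "nat \<Rightarrow> 'a set"
  assumes Si: "\<And>j. j \<le> n \<Longrightarrow> integrable M (Sj j)"
    and sup: "\<And>j. j < n \<Longrightarrow> (\<integral>\<omega>. indicator (A \<inter> C (Suc j)) \<omega> * Sj (Suc j) \<omega> \<partial>M) \<le> (\<integral>\<omega>. indicator (A \<inter> C (Suc j)) \<omega> * Sj j \<omega> \<partial>M)"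
    and C0: "C 0 = space M" and Cdec: "\<And>j. j < n \<Longrightarrow> C (Suc j) \<subseteq> C j"
    and Cm: "\<And>j. j \<le> n \<Longrightarrow> C j \<in> events" and A: "A \<in> events"
  shows "(\<integral>\<omega>. indicator A \<omega> * ((\<Sum>j<n. indicator (C j - C (Suc j)) \<omega> * Sj j \<omega>) + indicator (C n) \<omega> * Sj n \<omega>) \<partial>M)
      \<le> (\<integral>\<omega>. indicator A \<omega> * Sj 0 \<omega> \<partial>M)"
proof -
  define Q where "Q k \<omega> = (\<Sum>j<k. indicator (C j - C (Suc j)) \<omega> * Sj j \<omega>) + indicator (C k) \<omega> * Sj k \<omega>" for k \<omega>
  have Qi: "integrable M (\<lambda>\<omega>. indicator A \<omega> * Q k \<omega>)" if "k \<le> n" for k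
  proof -
    have "integrable M (\<lambda>\<omega>. indicator A \<omega> * (indicator (C j - C (Suc j)) \<omega> * Sj j \<omega>))" if "j < k" for j
    proof -
      have "C j - C (Suc j) \<in> events" "C j \<in> events" using Cm that \<open>k \<le> n\<close> by auto
      then have "integrable M (\<lambda>\<omega>. indicator (C j - C (Suc j)) \<omega> * Sj j \<omega>)"
        using integrable_mult_indicator[of "C j - C (Suc j)" M "Sj j"] Si that \<open>k \<le> n\<close> by simp
      from integrable_mult_indicator[OF A this] show ?thesis by simp
    qed
    moreover have "integrable M (\<lambda>\<omega>. indicator A \<omega> * (indicator (C k) \<omega> * Sj k \<omega>))"
    proof -
      have "integrable M (\<lambda>\<omega>. indicator (C k) \<omega> * Sj k \<omega>)"
        using integrable_mult_indicator[of "C k" M "Sj k"] Si Cm that by simp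
      from integrable_mult_indicator[OF A this] show ?thesis by simp
    qed
    ultimately have "integrable M (\<lambda>\<omega>. (\<Sum>j<k. indicator A \<omega> * (indicator (C j - C (Suc j)) \<omega> * Sj j \<omega>))
        + indicator A \<omega> * (indicator (C k) \<omega> * Sj k \<omega>))"
      by (intro Bochner_Integration.integrable_add Bochner_Integration.integrable_sum) auto
    then show ?thesis unfolding Q_def by (simp only: distrib_left sum_distrib_left)
  qed
  have "(\<integral>\<omega>. indicator A \<omega> * Q k \<omega> \<partial>M) \<le> (\<integral>\<omega>. indicator A \<omega> * Sj 0 \<omega> \<partial>M)" if "k \<le> n" for k
    using that
  proof (induction k)
    case 0
    have "(\<integral>\<omega>. indicator A \<omega> * Q 0 \<omega> \<partial>M) = (\<integral>\<omega>. indicator A \<omega> * Sj 0 \<omega> \<partial>M)"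
      by (rule Bochner_Integration.integral_cong) (auto simp: Q_def C0)
    then show ?case by simp
  next
    case (Suc k)
    then have kn: "k < n" by simp
    define D where "D = A \<inter> C (Suc k)"
    have Dm: "D \<in> events" unfolding D_def using A Cm[of "Suc k"] Suc by auto
    have eq: "indicator A \<omega> * Q (Suc k) \<omega> = indicator A \<omega> * Q k \<omega> + (indicator D \<omega> * Sj (Suc k) \<omega> - indicator D \<omega> * Sj k \<omega>)" for \<omega>
    proof -
      have h: "indicator (C k - C (Suc k)) \<omega> = (indicator (C k) \<omega> - indicator (C (Suc k)) \<omega> :: real)"
        using Cdec[OF kn] by (auto simp: indicator_def)
      show ?thesis by (simp only: Q_def D_def indicator_inter_arith sum.lessThan_Suc h) (simp add: algebra_simps)
    qed
    have i1: "integrable M (\<lambda>\<omega>. indicator D \<omega> * Sj (Suc k) \<omega>)"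
      using integrable_mult_indicator[OF Dm Si[of "Suc k"]] Suc by simp
    have i2: "integrable M (\<lambda>\<omega>. indicator D \<omega> * Sj k \<omega>)"
      using integrable_mult_indicator[OF Dm Si[of k]] kn by simp
    have "(\<integral>\<omega>. indicator A \<omega> * Q (Suc k) \<omega> \<partial>M) = (\<integral>\<omega>. indicator A \<omega> * Q k \<omega> \<partial>M)
        + ((\<integral>\<omega>. indicator D \<omega> * Sj (Suc k) \<omega> \<partial>M) - (\<integral>\<omega>. indicator D \<omega> * Sj k \<omega> \<partial>M))"
      unfolding eq using Qi[of k] kn i1 i2 by simp
    also have "\<dots> \<le> (\<integral>\<omega>. indicator A \<omega> * Q k \<omega> \<partial>M)" using sup[OF kn] unfolding D_def by simp
    also have "\<dots> \<le> (\<integral>\<omega>. indicator A \<omega> * Sj 0 \<omega> \<partial>M)" using Suc kn by simp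
    finally show ?case .
  qed
  from this[of n] show ?thesis unfolding Q_def by simp
qed



lemma stidx_ge_iff: "j \<le> stidx G d s t n \<longleftrightarrow> (\<forall>i<j. \<not> (i = n \<or> G (grid s t n i) \<le> d))"
proof
  assume j: "j \<le> stidx G d s t n"
  show "\<forall>i<j. \<not> (i = n \<or> G (grid s t n i) \<le> d)"
  proof (intro allI impI notI)
    fix i assume "i < j" "i = n \<or> G (grid s t n i) \<le> d"
    then have "stidx G d s t n \<le> i" unfolding stidx_def by (intro Least_le)
    then show False using j \<open>i < j\<close> by simp
  qed
next
  assume H: "\<forall>i<j. \<not> (i = n \<or> G (grid s t n i) \<le> d)"
  have P: "stidx G d s t n = n \<or> G (grid s t n (stidx G d s t n)) \<le> d"
    unfolding stidx_def by (rule LeastI[of _ n]) simp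
  show "j \<le> stidx G d s t n"
  proof (rule ccontr)
    assume "\<not> j \<le> stidx G d s t n"
    then show False using H P by auto
  qed
qed

lemma stidx_eq_iff: "stidx G d s t n = j \<longleftrightarrow> (j = n \<or> G (grid s t n j) \<le> d) \<and> (\<forall>i<j. \<not> (i = n \<or> G (grid s t n i) \<le> d))"
proof -
  have P: "stidx G d s t n = n \<or> G (grid s t n (stidx G d s t n)) \<le> d"
    unfolding stidx_def by (rule LeastI[of _ n]) simp
  show ?thesis
  proof
    assume "stidx G d s t n = j"
    then show "(j = n \<or> G (grid s t n j) \<le> d) \<and> (\<forall>i<j. \<not> (i = n \<or> G (grid s t n i) \<le> d))"
      using P stidx_ge_iff[of j G d s t n] by auto
  next
    assume H: "(j = n \<or> G (grid s t n j) \<le> d) \<and> (\<forall>i<j. \<not> (i = n \<or> G (grid s t n i) \<le> d))"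
    then have "j \<le> stidx G d s t n" using stidx_ge_iff by blast
    moreover have "stidx G d s t n \<le> j" unfolding stidx_def using H by (intro Least_le) blast
    ultimately show "stidx G d s t n = j" by simp
  qed
qed

context bsde_sol begin

interpretation P: prob_space M by (rule PS)

lemma h_cont: "continuous_on UNIV h"
  unfolding continuous_on_iff
proof (intro ballI allI impI)
  fix x e :: real assume e: "0 < e"
  define d where "d = e / (\<bar>Mh\<bar> + 1)"
  have d: "0 < d" unfolding d_def using e by simp
  show "\<exists>d>0. \<forall>x'\<in>UNIV. dist x' x < d \<longrightarrow> dist (h x') (h x) < e"
  proof (intro exI[of _ d] conjI ballI impI d)
    fix x' assume "dist x' x < d"
    then have "\<bar>x' - x\<bar> < d" by (simp add: dist_real_def)
    have "\<bar>h x' - h x\<bar> \<le> Mh * \<bar>x' - x\<bar>" using hlip by blast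
    also have "\<dots> \<le> (\<bar>Mh\<bar> + 1) * \<bar>x' - x\<bar>" by (intro mult_right_mono) auto
    also have "\<dots> < (\<bar>Mh\<bar> + 1) * d" using \<open>\<bar>x' - x\<bar> < d\<close> by (intro mult_strict_left_mono) auto
    also have "\<dots> = e" unfolding d_def by simp
    finally show "dist (h x') (h x) < e" by (simp add: dist_real_def)
  qed
qed

lemma h_meas[measurable]: "h \<in> borel_measurable borel"
  using h_cont by (rule borel_measurable_continuous_onI)

definition Gs :: "real \<Rightarrow> 'a \<Rightarrow> real" where
  "Gs u \<omega> = (\<Sum>i<N. h (Y i u \<omega>))"

lemma Gs_meas: "0 \<le> u \<Longrightarrow> u \<le> T \<Longrightarrow> Gs u \<in> borel_measurable (Fl u)"
proof -
  assume u: "0 \<le> u" "u \<le> T"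
  have "\<And>i. i \<in> {..<N} \<Longrightarrow> (\<lambda>\<omega>. h (Y i u \<omega>)) \<in> borel_measurable (Fl u)"
    using Y_props(1)[OF _ u] by (auto intro: measurable_compose[OF _ h_meas])
  then show ?thesis unfolding Gs_def by (rule borel_measurable_sum)
qed

lemma Gs_cont: "\<omega> \<in> space M \<Longrightarrow> continuous_on {0..T} (\<lambda>u. Gs u \<omega>)"
proof -
  assume om: "\<omega> \<in> space M"
  have "continuous_on {0..T} (\<lambda>u. h (Y i u \<omega>))" if "i < N" for i
    using continuous_on_compose2[OF h_cont, of "{0..T}" "\<lambda>u. Y i u \<omega>"] sol that om
    unfolding flat_solution_def by auto
  then show ?thesis unfolding Gs_def by (intro continuous_on_sum) auto
qed

lemma K_cont: "\<omega> \<in> space M \<Longrightarrow> continuous_on {0..T} (\<lambda>u. K u \<omega>) \<and> mono_on {0..T} (\<lambda>u. K u \<omega>)"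
  using sol unfolding flat_solution_def by auto

lemma skorokhod: "AE \<omega> in M. (LINT u:{0..T}|interval_measure (\<lambda>u. K (max 0 (min u T)) \<omega>).
                     (\<Sum>i<N. h (Y i u \<omega>)) / real N) = 0"
  using sol unfolding flat_solution_def by blast

lemma flat_path:
  "AE \<omega> in M. \<forall>a b. 0 \<le> a \<longrightarrow> a \<le> b \<longrightarrow> b \<le> T \<longrightarrow> (\<forall>v\<in>{a..b}. 0 < Gs v \<omega>) \<longrightarrow> K b \<omega> = K a \<omega>"
proof (rule AE_mp[OF AE_conjI[OF skorokhod constr']], rule AE_I2, rule impI, intro allI impI)
  fix \<omega> a b assume om: "\<omega> \<in> space M"
    and H: "(LINT u:{0..T}|interval_measure (\<lambda>u. K (max 0 (min u T)) \<omega>). (\<Sum>i<N. h (Y i u \<omega>)) / real N) = 0 \<and>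
            (\<forall>u\<in>{0..T}. 0 \<le> (\<Sum>i<N. h (Y i u \<omega>)))"
    and ab: "0 \<le> a" "a \<le> b" "b \<le> T" and pos: "\<forall>v\<in>{a..b}. 0 < Gs v \<omega>"
  have Np: "real N > 0" using N1 by simp
  show "K b \<omega> = K a \<omega>"
  proof (rule flat_lemma[of T "\<lambda>u. K u \<omega>" "\<lambda>u. Gs u \<omega> / real N"])
    show "continuous_on {0..T} (\<lambda>u. K u \<omega>)" "mono_on {0..T} (\<lambda>u. K u \<omega>)" using K_cont[OF om] by auto
    show "continuous_on {0..T} (\<lambda>u. Gs u \<omega> / real N)" using Gs_cont[OF om] Np by (intro continuous_intros) auto
    show "\<forall>u\<in>{0..T}. 0 \<le> Gs u \<omega> / real N" using H Np unfolding Gs_def by auto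
    show "(LINT u:{0..T}|interval_measure (\<lambda>u. K (max 0 (min u T)) \<omega>). Gs u \<omega> / real N) = 0"
      using H unfolding Gs_def by simp
    show "0 \<le> a" "a \<le> b" "b \<le> T" by (fact ab)+
    show "\<forall>v\<in>{a..b}. 0 < Gs v \<omega> / real N" using pos Np by auto
  qed
qed

end


context bsde_sol begin

interpretation P: prob_space M by (rule PS)

definition idx :: "real \<Rightarrow> real \<Rightarrow> nat \<Rightarrow> 'a \<Rightarrow> nat" where
  "idx s d n \<omega> = stidx (\<lambda>u. Gs u \<omega>) d s t n"

definition Eset :: "real \<Rightarrow> real \<Rightarrow> nat \<Rightarrow> nat \<Rightarrow> 'a set" where
  "Eset s d n j = {\<omega> \<in> space M. idx s d n \<omega> = j}"

definition Cset :: "real \<Rightarrow> real \<Rightarrow> nat \<Rightarrow> nat \<Rightarrow> 'a set" where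
  "Cset s d n j = {\<omega> \<in> space M. j \<le> idx s d n \<omega>}"

lemma idx_le: "idx s d n \<omega> \<le> n" unfolding idx_def by (rule stidx_le)

lemma grid_in: "0 \<le> s \<Longrightarrow> s \<le> t \<Longrightarrow> j \<le> n \<Longrightarrow> 0 \<le> grid s t n j \<and> grid s t n j \<le> t"
  using grid_range[of s t j n] by auto

lemma Cset_meas:
  assumes s: "0 \<le> s" "s \<le> t" and jk: "j \<le> Suc k" "k \<le> n"
  shows "Cset s d n j \<in> sets (Fl (grid s t n k))"
proof -
  have gk: "0 \<le> grid s t n k" "grid s t n k \<le> T" using grid_in[OF s jk(2)] t by auto
  have eq: "Cset s d n j = {\<omega> \<in> space (Fl (grid s t n k)). \<forall>i\<in>{..<j}. \<not> (i = n \<or> Gs (grid s t n i) \<omega> \<le> d)}"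
    unfolding Cset_def idx_def using stidx_ge_iff by auto
  show ?thesis unfolding eq
  proof (rule sets.sets_Collect_finite_All)
    fix i assume i: "i \<in> {..<j}"
    then have il: "i \<le> k" using jk by simp
    have gi: "0 \<le> grid s t n i" "grid s t n i \<le> grid s t n k" using grid_in[OF s] il jk grid_mono[OF s(2) il] by auto
    have "Gs (grid s t n i) \<in> borel_measurable (Fl (grid s t n k))"
      using meas_Fl_mono[OF Gs_meas[OF gi(1)] gi(2) gk(2)] gi gk by simp
    then show "{\<omega> \<in> space (Fl (grid s t n k)). \<not> (i = n \<or> Gs (grid s t n i) \<omega> \<le> d)} \<in> sets (Fl (grid s t n k))"
      by measurable
  qed simp
qed

lemma Eset_eq: "j < n \<Longrightarrow> Eset s d n j = Cset s d n j - Cset s d n (Suc j)"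
  unfolding Eset_def Cset_def by auto

lemma Eset_n: "Eset s d n n = Cset s d n n"
  unfolding Eset_def Cset_def using idx_le[of s d n] by (auto intro: antisym)

lemma Eset_meas:
  assumes s: "0 \<le> s" "s \<le> t" and j: "j \<le> n"
  shows "Eset s d n j \<in> sets (Fl (grid s t n j))"
proof (cases "j = n")
  case True
  then show ?thesis using Eset_n Cset_meas[OF s _ j, of n] by simp
next
  case False
  then have "j < n" using j by simp
  then show ?thesis unfolding Eset_eq[OF \<open>j < n\<close>]
    using Cset_meas[OF s _ j, of j] Cset_meas[OF s _ j, of "Suc j"] by auto
qed

lemma pick:
  fixes ff :: "nat \<Rightarrow> real"
  assumes "\<omega> \<in> space M"
  shows "(\<Sum>j<Suc n. indicator (Eset s d n j) \<omega> * ff j) = ff (idx s d n \<omega>)"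
proof -
  have "(\<Sum>j<Suc n. indicator (Eset s d n j) \<omega> * ff j) = (\<Sum>j<Suc n. if j = idx s d n \<omega> then ff j else 0)"
    using assms by (intro sum.cong) (auto simp: Eset_def)
  also have "\<dots> = ff (idx s d n \<omega>)" using idx_le[of s d n \<omega>] by (simp add: sum.delta')
  finally show ?thesis .
qed

end


context bsde_sol begin

interpretation P: prob_space M by (rule PS)

lemma Eset_M: "0 \<le> s \<Longrightarrow> s \<le> t \<Longrightarrow> j \<le> n \<Longrightarrow> Eset s d n j \<in> sets M"
  using Eset_meas sets_Fl_sub grid_in t by (meson order.trans subsetD)

lemma decomp:
  fixes ff :: "nat \<Rightarrow> 'a \<Rightarrow> real"
  assumes s: "0 \<le> s" "s \<le> t" and A: "A \<in> sets M" and fi: "\<And>j. j \<le> n \<Longrightarrow> integrable M (ff j)"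
  shows "integrable M (\<lambda>\<omega>. indicator A \<omega> * ff (idx s d n \<omega>) \<omega>)"
    and "(\<integral>\<omega>. indicator A \<omega> * ff (idx s d n \<omega>) \<omega> \<partial>M) = (\<Sum>j<Suc n. \<integral>\<omega>. indicator (A \<inter> Eset s d n j) \<omega> * ff j \<omega> \<partial>M)"
proof -
  have eq: "indicator A \<omega> * ff (idx s d n \<omega>) \<omega> = (\<Sum>j<Suc n. indicator (A \<inter> Eset s d n j) \<omega> * ff j \<omega>)"
    if "\<omega> \<in> space M" for \<omega>
    using pick[OF that, where n=n and s=s and d=d and ff="\<lambda>j. indicator A \<omega> * ff j \<omega>"]
    by (simp add: indicator_inter_arith algebra_simps)
  have ii: "integrable M (\<lambda>\<omega>. indicator (A \<inter> Eset s d n j) \<omega> * ff j \<omega>)" if "j < Suc n" for j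
  proof -
    have "A \<inter> Eset s d n j \<in> sets M" using A Eset_M[OF s, where j=j and n=n and d=d] that by auto
    from integrable_mult_indicator[OF this fi] that show ?thesis by simp
  qed
  have isum: "integrable M (\<lambda>\<omega>. \<Sum>j<Suc n. indicator (A \<inter> Eset s d n j) \<omega> * ff j \<omega>)"
    using ii by (intro Bochner_Integration.integrable_sum) auto
  show "integrable M (\<lambda>\<omega>. indicator A \<omega> * ff (idx s d n \<omega>) \<omega>)"
    using isum by (subst Bochner_Integration.integrable_cong[OF refl eq]) auto
  have "(\<integral>\<omega>. indicator A \<omega> * ff (idx s d n \<omega>) \<omega> \<partial>M) = (\<integral>\<omega>. (\<Sum>j<Suc n. indicator (A \<inter> Eset s d n j) \<omega> * ff j \<omega>) \<partial>M)"
    by (rule Bochner_Integration.integral_cong[OF refl eq])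
  also have "\<dots> = (\<Sum>j<Suc n. \<integral>\<omega>. indicator (A \<inter> Eset s d n j) \<omega> * ff j \<omega> \<partial>M)"
    using ii by (intro Bochner_Integration.integral_sum) auto
  finally show "(\<integral>\<omega>. indicator A \<omega> * ff (idx s d n \<omega>) \<omega> \<partial>M) = (\<Sum>j<Suc n. \<integral>\<omega>. indicator (A \<inter> Eset s d n j) \<omega> * ff j \<omega> \<partial>M)" .
qed

lemma V_conv:
  assumes s: "0 \<le> s" "s \<le> t" and d: "0 < d"
  shows "AE \<omega> in M. (\<lambda>n. K (grid s t n (idx s d n \<omega>)) \<omega>) \<longlonglongrightarrow> K s \<omega>"
  using flat_path
proof (rule AE_mp, intro AE_I2 impI)
  fix \<omega> assume om: "\<omega> \<in> space M"
    and fl: "\<forall>a b. 0 \<le> a \<longrightarrow> a \<le> b \<longrightarrow> b \<le> T \<longrightarrow> (\<forall>v\<in>{a..b}. 0 < Gs v \<omega>) \<longrightarrow> K b \<omega> = K a \<omega>"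
  have sub: "{s..t} \<subseteq> {0..T}" using s t by auto
  show "(\<lambda>n. K (grid s t n (idx s d n \<omega>)) \<omega>) \<longlonglongrightarrow> K s \<omega>"
    unfolding idx_def
  proof (rule path_conv)
    show "s \<le> t" by (rule s(2))
    show "continuous_on {s..t} (\<lambda>u. K u \<omega>)" using K_cont[OF om] continuous_on_subset sub by blast
    show "mono_on {s..t} (\<lambda>u. K u \<omega>)" using K_cont[OF om] mono_on_subset sub by blast
    show "continuous_on {s..t} (\<lambda>u. Gs u \<omega>)" using Gs_cont[OF om] continuous_on_subset sub by blast
    show "0 < d" by (rule d)
    fix a b assume "s \<le> a" "a \<le> b" "b \<le> t" "\<forall>v\<in>{a..b}. 0 < Gs v \<omega>"
    then show "K b \<omega> = K a \<omega>" using fl s t by auto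
  qed
qed

end


context bsde_sol begin

interpretation P: prob_space M by (rule PS)

lemma R0_t: "AE \<omega> in M. R0 t \<omega> = 0"
proof -
  interpret S: sigma_finite_subalgebra M "Fl t" using sfs t by simp
  have "AE \<omega> in M. real_cond_exp M (Fl t) (\<lambda>\<omega>. 0) \<omega> = 0"
    by (rule S.real_cond_exp_F_meas) auto
  then show ?thesis unfolding R0_def by simp
qed

lemma phi_ge0: "0 \<le> phi u \<omega>"
  unfolding phi_def by (rule ms_ge0[OF N1 hmono m0 hlip])

lemma pointwise_bound:
  assumes sup: "supermart M Fl t S" and dom: "\<forall>u\<in>{0..t}. AE \<omega> in M. phi u \<omega> \<le> S u \<omega>"
    and s: "0 \<le> s" "s \<le> t" and d: "0 < d" and n: "1 \<le> n"
  shows "AE \<omega> in M. R0 (grid s t n (idx s d n \<omega>)) \<omega> - d / (real N * m) \<le> S (grid s t n (idx s d n \<omega>)) \<omega>"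
proof -
  define g where "g j = grid s t n j" for j
  have gin: "j \<le> n \<Longrightarrow> 0 \<le> g j \<and> g j \<le> t" for j unfolding g_def using grid_in[OF s] by auto
  have H1: "AE \<omega> in M. \<forall>j\<in>{..n}. phi (g j) \<omega> \<le> S (g j) \<omega>"
    using dom gin by (subst AE_finite_all) auto
  have H2: "AE \<omega> in M. \<forall>j\<in>{..n}. \<forall>i<N. Y i (g j) \<omega> = Xp i (g j) \<omega> + R0 (g j) \<omega>"
    using lemma_A_all gin by (subst AE_finite_all) auto
  have H3: "AE \<omega> in M. \<forall>j\<in>{..n}. 0 \<le> R0 (g j) \<omega>"
    using R0_props(3) gin by (subst AE_finite_all) auto
  show ?thesis
    using H1 H2 H3 constr' R0_t
  proof eventually_elim
    case (elim \<omega>)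
    define j where "j = idx s d n \<omega>"
    have jn: "j \<le> n" unfolding j_def by (rule idx_le)
    have Pj: "j = n \<or> Gs (g j) \<omega> \<le> d"
      using stidx_eq_iff[of "\<lambda>u. Gs u \<omega>" d s t n j] unfolding j_def idx_def g_def by simp
    have Np: "real N * m > 0" using N1 m0 by simp
    show ?case
    proof (cases "j = n")
      case True
      then have gt: "g j = t" unfolding g_def using grid_n[OF n] by simp
      have r0: "R0 (g j) \<omega> = 0" unfolding gt using elim(5) .
      have ps: "phi (g j) \<omega> \<le> S (g j) \<omega>" using elim(1) jn by auto
      have "0 \<le> d / (real N * m)" using d Np by simp
      then have "R0 (g j) \<omega> - d / (real N * m) \<le> S (g j) \<omega>" using phi_ge0[of "g j" \<omega>] r0 ps by linarith
      then show ?thesis unfolding g_def j_def .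
    next
      case False
      then have Gd: "Gs (g j) \<omega> \<le> d" using Pj by simp
      have gj: "0 \<le> g j" "g j \<le> T" using gin[OF jn] t by auto
      have sumeq: "(\<Sum>i<N. h (R0 (g j) \<omega> + Xp i (g j) \<omega>)) = Gs (g j) \<omega>"
        unfolding Gs_def using elim(2) jn by (intro sum.cong) (auto simp: add.commute)
      have G0: "0 \<le> Gs (g j) \<omega>" unfolding Gs_def using elim(4) gj by auto
      have "R0 (g j) \<omega> - phi (g j) \<omega> \<le> Gs (g j) \<omega> / (real N * m)"
        unfolding phi_def using ms_gap[OF N1 hmono m0 hlip, of "R0 (g j) \<omega>" "\<lambda>i. Xp i (g j) \<omega>"]
          elim(3) jn sumeq G0 by simp
      also have "\<dots> \<le> d / (real N * m)" using Gd Np by (simp add: divide_right_mono)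
      finally have a: "R0 (g j) \<omega> - phi (g j) \<omega> \<le> d / (real N * m)" .
      have "phi (g j) \<omega> \<le> S (g j) \<omega>" using elim(1) jn by auto
      then have "R0 (g j) \<omega> - d / (real N * m) \<le> S (g j) \<omega>" using a by linarith
      then show ?thesis unfolding g_def j_def .
    qed
  qed
qed

end


context bsde_sol begin

interpretation P: prob_space M by (rule PS)

lemma key_ineq:
  assumes sup: "supermart M Fl t S" and dom: "\<forall>u\<in>{0..t}. AE \<omega> in M. phi u \<omega> \<le> S u \<omega>"
    and s: "0 \<le> s" "s \<le> t" and d: "0 < d" and n: "1 \<le> n" and A: "A \<in> sets (Fl s)"
  shows "(\<integral>\<omega>. indicator A \<omega> * R0 s \<omega> \<partial>M) \<le> (\<integral>\<omega>. indicator A \<omega> * S s \<omega> \<partial>M) + d / (real N * m)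
      + (\<integral>\<omega>. K (grid s t n (idx s d n \<omega>)) \<omega> - K s \<omega> \<partial>M)"
proof -
  define g where "g j = grid s t n j" for j
  define c where "c = d / (real N * m)"
  define ix where "ix = idx s d n"
  have sT: "s \<le> T" using s t by simp
  have AM: "A \<in> sets M" using A sets_Fl_sub sT by auto
  have gin: "j \<le> n \<Longrightarrow> 0 \<le> g j \<and> g j \<le> t" for j unfolding g_def using grid_in[OF s] by auto
  have gT: "j \<le> n \<Longrightarrow> g j \<le> T" for j
  proof -
    assume "j \<le> n"
    then have "g j \<le> t" using gin by blast
    then show ?thesis using t by simp
  qed
  have gs: "j \<le> n \<Longrightarrow> s \<le> g j" for j unfolding g_def using grid_range[OF s(2)] by auto
  have g0: "g 0 = s" unfolding g_def by simp
  have Sint: "j \<le> n \<Longrightarrow> integrable M (S (g j))" for j using sup gin unfolding supermart_def by auto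
  have R0int: "j \<le> n \<Longrightarrow> integrable M (R0 (g j))" for j using R0_props(2) gin by auto
  have KKint: "j \<le> n \<Longrightarrow> integrable M (\<lambda>\<omega>. K t \<omega> - K (g j) \<omega>)" for j using R0_props(4) gin by auto
  have Kint: "j \<le> n \<Longrightarrow> integrable M (K (g j))" for j using K_props(2) gin gT by auto
  have Ktint: "integrable M (K t)" using K_props(2) t by auto
  have Ksint: "integrable M (K s)" using K_props(2) s sT by auto
  have AEj: "A \<inter> Eset s d n j \<in> sets (Fl (g j))" if "j \<le> n" for j
  proof -
    have "A \<in> sets (Fl (g j))" using A sets_Fl_mono[OF gs[OF that] gT[OF that]] by auto
    then show ?thesis using Eset_meas[OF s that] unfolding g_def by auto
  qed
  have step1: "(\<integral>\<omega>. indicator A \<omega> * S (g (ix \<omega>)) \<omega> \<partial>M) \<le> (\<integral>\<omega>. indicator A \<omega> * S s \<omega> \<partial>M)"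
  proof -
    have opt: "(\<integral>\<omega>. indicator A \<omega> * ((\<Sum>j<n. indicator (Cset s d n j - Cset s d n (Suc j)) \<omega> * S (g j) \<omega>)
         + indicator (Cset s d n n) \<omega> * S (g n) \<omega>) \<partial>M) \<le> (\<integral>\<omega>. indicator A \<omega> * S (g 0) \<omega> \<partial>M)"
    proof (rule P.opt_sampling)
      show "\<And>j. j \<le> n \<Longrightarrow> integrable M (S (g j))" by (rule Sint)
      show "Cset s d n 0 = space M" unfolding Cset_def by auto
      show "\<And>j. j < n \<Longrightarrow> Cset s d n (Suc j) \<subseteq> Cset s d n j" unfolding Cset_def by auto
      show "Cset s d n j \<in> P.events" if jn: "j \<le> n" for j
      proof -
        have "Cset s d n j \<in> sets (Fl (grid s t n n))" using Cset_meas[OF s, of j n n] jn by simp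
        moreover have "sets (Fl (grid s t n n)) \<subseteq> sets M" using sets_Fl_sub gT[of n] unfolding g_def by simp
        ultimately show ?thesis by blast
      qed
      show "A \<in> P.events" by (rule AM)
      fix j assume jn: "j < n"
      have jn': "j \<le> n" using jn by simp
      define Bs where "Bs = A \<inter> Cset s d n (Suc j)"
      have Bs: "Bs \<in> sets (Fl (g j))"
      proof -
        have "A \<in> sets (Fl (g j))" using A sets_Fl_mono[OF gs[OF jn'] gT[OF jn']] by auto
        then show ?thesis unfolding Bs_def g_def using Cset_meas[OF s _ , of "Suc j" j n] jn by auto
      qed
      have gj: "0 \<le> g j" "g j \<le> g (Suc j)" "g (Suc j) \<le> t"
        using gin[of j] gin[of "Suc j"] jn grid_mono[OF s(2), of j "Suc j"] unfolding g_def by auto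
      have ce: "AE \<omega> in M. real_cond_exp M (Fl (g j)) (S (g (Suc j))) \<omega> \<le> S (g j) \<omega>"
        using sup gj unfolding supermart_def by blast
      interpret Sj: sigma_finite_subalgebra M "Fl (g j)" using sfs gT jn by simp
      have BsM: "Bs \<in> sets M" using Bs sets_Fl_sub[OF gT[OF jn']] by blast
      have "(\<integral>\<omega>. indicator Bs \<omega> * S (g (Suc j)) \<omega> \<partial>M) = (\<integral>\<omega>. indicator Bs \<omega> * real_cond_exp M (Fl (g j)) (S (g (Suc j))) \<omega> \<partial>M)"
        using cond_exp_ind[OF gT Sint Bs] jn by simp
      also have "\<dots> \<le> (\<integral>\<omega>. indicator Bs \<omega> * S (g j) \<omega> \<partial>M)"
      proof (rule integral_mono_AE)
        show "integrable M (\<lambda>\<omega>. indicator Bs \<omega> * real_cond_exp M (Fl (g j)) (S (g (Suc j))) \<omega>)"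
          using integrable_mult_indicator[OF BsM Sj.real_cond_exp_int(1)[OF Sint[of "Suc j"]]] jn by simp
        show "integrable M (\<lambda>\<omega>. indicator Bs \<omega> * S (g j) \<omega>)"
          using integrable_mult_indicator[OF BsM Sint[of j]] jn by simp
        show "AE \<omega> in M. indicator Bs \<omega> * real_cond_exp M (Fl (g j)) (S (g (Suc j))) \<omega> \<le> indicator Bs \<omega> * S (g j) \<omega>"
          using ce by eventually_elim (auto simp: indicator_def)
      qed
      finally show "(\<integral>\<omega>. indicator (A \<inter> Cset s d n (Suc j)) \<omega> * S (g (Suc j)) \<omega> \<partial>M)
          \<le> (\<integral>\<omega>. indicator (A \<inter> Cset s d n (Suc j)) \<omega> * S (g j) \<omega> \<partial>M)" unfolding Bs_def .
    qed
    have "(\<integral>\<omega>. indicator A \<omega> * ((\<Sum>j<n. indicator (Cset s d n j - Cset s d n (Suc j)) \<omega> * S (g j) \<omega>)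
         + indicator (Cset s d n n) \<omega> * S (g n) \<omega>) \<partial>M) = (\<integral>\<omega>. indicator A \<omega> * S (g (ix \<omega>)) \<omega> \<partial>M)"
    proof (rule Bochner_Integration.integral_cong[OF refl])
      fix \<omega> assume om: "\<omega> \<in> space M"
      have "(\<Sum>j<n. indicator (Cset s d n j - Cset s d n (Suc j)) \<omega> * S (g j) \<omega>) + indicator (Cset s d n n) \<omega> * S (g n) \<omega>
          = (\<Sum>j<Suc n. indicator (Eset s d n j) \<omega> * S (g j) \<omega>)"
      proof -
        have "(\<Sum>j<n. indicator (Cset s d n j - Cset s d n (Suc j)) \<omega> * S (g j) \<omega>)
            = (\<Sum>j<n. indicator (Eset s d n j) \<omega> * S (g j) \<omega>)"
          by (rule sum.cong) (simp_all add: Eset_eq)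
        then show ?thesis by (simp add: Eset_n)
      qed
      also have "\<dots> = S (g (ix \<omega>)) \<omega>" unfolding ix_def using pick[OF om, where ff="\<lambda>j. S (g j) \<omega>"] by simp
      finally show "indicator A \<omega> * ((\<Sum>j<n. indicator (Cset s d n j - Cset s d n (Suc j)) \<omega> * S (g j) \<omega>)
         + indicator (Cset s d n n) \<omega> * S (g n) \<omega>) = indicator A \<omega> * S (g (ix \<omega>)) \<omega>" by simp
    qed
    then show ?thesis using opt g0 by simp
  qed
  have iS: "integrable M (\<lambda>\<omega>. indicator A \<omega> * S (g (ix \<omega>)) \<omega>)"
    using decomp(1)[OF s AM, where ff="\<lambda>j. S (g j)" and n=n and d=d] Sint unfolding ix_def by simp
  have iR: "integrable M (\<lambda>\<omega>. indicator A \<omega> * R0 (g (ix \<omega>)) \<omega>)"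
    using decomp(1)[OF s AM, where ff="\<lambda>j. R0 (g j)" and n=n and d=d] R0int unfolding ix_def by simp
  have iA: "integrable M (\<lambda>\<omega>. indicator A \<omega> * c)"
    using integrable_mult_indicator[OF AM P.integrable_const[of c]] by simp
  have pb: "AE \<omega> in M. R0 (g (ix \<omega>)) \<omega> - c \<le> S (g (ix \<omega>)) \<omega>"
    using pointwise_bound[OF sup dom s d n] unfolding g_def ix_def c_def .
  have "(\<integral>\<omega>. indicator A \<omega> * R0 (g (ix \<omega>)) \<omega> - indicator A \<omega> * c \<partial>M) \<le> (\<integral>\<omega>. indicator A \<omega> * S (g (ix \<omega>)) \<omega> \<partial>M)"
  proof (rule integral_mono_AE)
    show "integrable M (\<lambda>\<omega>. indicator A \<omega> * R0 (g (ix \<omega>)) \<omega> - indicator A \<omega> * c)" using iR iA by simp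
    show "integrable M (\<lambda>\<omega>. indicator A \<omega> * S (g (ix \<omega>)) \<omega>)" by (rule iS)
    show "AE \<omega> in M. indicator A \<omega> * R0 (g (ix \<omega>)) \<omega> - indicator A \<omega> * c \<le> indicator A \<omega> * S (g (ix \<omega>)) \<omega>"
      using pb by eventually_elim (auto simp: indicator_def)
  qed
  moreover have "(\<integral>\<omega>. indicator A \<omega> * R0 (g (ix \<omega>)) \<omega> - indicator A \<omega> * c \<partial>M)
      = (\<integral>\<omega>. indicator A \<omega> * R0 (g (ix \<omega>)) \<omega> \<partial>M) - (\<integral>\<omega>. indicator A \<omega> * c \<partial>M)"
    using iR iA by (rule Bochner_Integration.integral_diff)
  moreover have "(\<integral>\<omega>. indicator A \<omega> * c \<partial>M) \<le> c"
  proof -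
    have c0: "0 \<le> c" unfolding c_def using d N1 m0 by simp
    have "(\<integral>\<omega>. indicator A \<omega> * c \<partial>M) = P.prob A * c" using AM by simp
    also have "\<dots> \<le> 1 * c" using c0 by (intro mult_right_mono) auto
    finally show ?thesis by simp
  qed
  ultimately have step2: "(\<integral>\<omega>. indicator A \<omega> * R0 (g (ix \<omega>)) \<omega> \<partial>M) \<le> (\<integral>\<omega>. indicator A \<omega> * S (g (ix \<omega>)) \<omega> \<partial>M) + c"
    by linarith
  have step3: "(\<integral>\<omega>. indicator A \<omega> * R0 (g (ix \<omega>)) \<omega> \<partial>M) = (\<integral>\<omega>. indicator A \<omega> * (K t \<omega> - K (g (ix \<omega>)) \<omega>) \<partial>M)"
  proof -
    have "(\<integral>\<omega>. indicator A \<omega> * R0 (g (ix \<omega>)) \<omega> \<partial>M) = (\<Sum>j<Suc n. \<integral>\<omega>. indicator (A \<inter> Eset s d n j) \<omega> * R0 (g j) \<omega> \<partial>M)"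
      using decomp(2)[OF s AM, where ff="\<lambda>j. R0 (g j)" and n=n and d=d] R0int unfolding ix_def by simp
    also have "\<dots> = (\<Sum>j<Suc n. \<integral>\<omega>. indicator (A \<inter> Eset s d n j) \<omega> * (K t \<omega> - K (g j) \<omega>) \<partial>M)"
    proof (rule sum.cong[OF refl])
      fix j assume "j \<in> {..<Suc n}"
      then have jn: "j \<le> n" by simp
      show "(\<integral>\<omega>. indicator (A \<inter> Eset s d n j) \<omega> * R0 (g j) \<omega> \<partial>M) = (\<integral>\<omega>. indicator (A \<inter> Eset s d n j) \<omega> * (K t \<omega> - K (g j) \<omega>) \<partial>M)"
        unfolding R0_def using cond_exp_ind[OF gT[OF jn] KKint[OF jn] AEj[OF jn]] .
    qed
    also have "\<dots> = (\<integral>\<omega>. indicator A \<omega> * (K t \<omega> - K (g (ix \<omega>)) \<omega>) \<partial>M)"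
      using decomp(2)[OF s AM, where ff="\<lambda>j \<omega>. K t \<omega> - K (g j) \<omega>" and n=n and d=d] KKint unfolding ix_def by simp
    finally show ?thesis .
  qed
  define V where "V \<omega> = K (g (ix \<omega>)) \<omega>" for \<omega>
  have Vint: "integrable M V"
  proof -
    have "integrable M (\<lambda>\<omega>. indicator (space M) \<omega> * K (g (ix \<omega>)) \<omega>)"
      using decomp(1)[OF s sets.top, where ff="\<lambda>j. K (g j)" and n=n and d=d] Kint unfolding ix_def by simp
    then show ?thesis unfolding V_def by (rule Bochner_Integration.integrable_cong[THEN iffD1, rotated 2]) auto
  qed
  have Vge: "K s \<omega> \<le> V \<omega>" if "\<omega> \<in> space M" for \<omega>
  proof -
    have "ix \<omega> \<le> n" unfolding ix_def by (rule idx_le)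
    then show ?thesis unfolding V_def using K_mono[OF that s(1) gs gT] by simp
  qed
  have i4a: "integrable M (\<lambda>\<omega>. indicator A \<omega> * (K t \<omega> - K s \<omega>))"
    using integrable_mult_indicator[OF AM R0_props(4)[OF s]] by simp
  have i4b: "integrable M (\<lambda>\<omega>. indicator A \<omega> * (V \<omega> - K s \<omega>))"
    using integrable_mult_indicator[OF AM, of "\<lambda>\<omega>. V \<omega> - K s \<omega>"] Vint Ksint by simp
  have "(\<integral>\<omega>. indicator A \<omega> * (K t \<omega> - K (g (ix \<omega>)) \<omega>) \<partial>M)
      = (\<integral>\<omega>. indicator A \<omega> * (K t \<omega> - K s \<omega>) - indicator A \<omega> * (V \<omega> - K s \<omega>) \<partial>M)"
    unfolding V_def by (rule Bochner_Integration.integral_cong) (auto simp: algebra_simps)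
  also have "\<dots> = (\<integral>\<omega>. indicator A \<omega> * (K t \<omega> - K s \<omega>) \<partial>M) - (\<integral>\<omega>. indicator A \<omega> * (V \<omega> - K s \<omega>) \<partial>M)"
    using i4a i4b by (rule Bochner_Integration.integral_diff)
  finally have e4: "(\<integral>\<omega>. indicator A \<omega> * (K t \<omega> - K (g (ix \<omega>)) \<omega>) \<partial>M)
      = (\<integral>\<omega>. indicator A \<omega> * R0 s \<omega> \<partial>M) - (\<integral>\<omega>. indicator A \<omega> * (V \<omega> - K s \<omega>) \<partial>M)"
    unfolding R0_def using cond_exp_ind[OF sT R0_props(4)[OF s] A] by simp
  have b4: "(\<integral>\<omega>. indicator A \<omega> * (V \<omega> - K s \<omega>) \<partial>M) \<le> (\<integral>\<omega>. V \<omega> - K s \<omega> \<partial>M)"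
  proof (rule integral_mono[OF i4b])
    show "integrable M (\<lambda>\<omega>. V \<omega> - K s \<omega>)" using Vint Ksint by simp
    fix \<omega> assume "\<omega> \<in> space M"
    then show "indicator A \<omega> * (V \<omega> - K s \<omega>) \<le> V \<omega> - K s \<omega>"
      using Vge by (auto simp: indicator_def)
  qed
  have "(\<integral>\<omega>. indicator A \<omega> * R0 s \<omega> \<partial>M) \<le> (\<integral>\<omega>. indicator A \<omega> * S s \<omega> \<partial>M) + c + (\<integral>\<omega>. V \<omega> - K s \<omega> \<partial>M)"
    using step1 step2 step3 e4 b4 by linarith
  then show ?thesis unfolding c_def V_def g_def ix_def .
qed

end


context bsde_sol begin

interpretation P: prob_space M by (rule PS)

lemma V_props:
  assumes s: "0 \<le> s" "s \<le> t"
  shows "integrable M (\<lambda>\<omega>. K (grid s t n (idx s d n \<omega>)) \<omega>)"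
    and "\<And>\<omega>. \<omega> \<in> space M \<Longrightarrow> K s \<omega> \<le> K (grid s t n (idx s d n \<omega>)) \<omega> \<and> K (grid s t n (idx s d n \<omega>)) \<omega> \<le> K t \<omega>"
proof -
  have gin: "j \<le> n \<Longrightarrow> 0 \<le> grid s t n j \<and> grid s t n j \<le> t" for j using grid_in[OF s] by auto
  have Kint: "j \<le> n \<Longrightarrow> integrable M (K (grid s t n j))" for j using K_props(2) gin t by force
  have "integrable M (\<lambda>\<omega>. indicator (space M) \<omega> * K (grid s t n (idx s d n \<omega>)) \<omega>)"
    using decomp(1)[OF s sets.top, where ff="\<lambda>j. K (grid s t n j)" and n=n and d=d] Kint by simp
  then show "integrable M (\<lambda>\<omega>. K (grid s t n (idx s d n \<omega>)) \<omega>)"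
    by (rule Bochner_Integration.integrable_cong[THEN iffD1, rotated 2]) auto
  fix \<omega> assume om: "\<omega> \<in> space M"
  have jn: "idx s d n \<omega> \<le> n" by (rule idx_le)
  have r: "s \<le> grid s t n (idx s d n \<omega>)" "grid s t n (idx s d n \<omega>) \<le> t"
    using grid_range[OF s(2) jn] by auto
  show "K s \<omega> \<le> K (grid s t n (idx s d n \<omega>)) \<omega> \<and> K (grid s t n (idx s d n \<omega>)) \<omega> \<le> K t \<omega>"
    using K_mono[OF om s(1) r(1)] K_mono[OF om _ r(2)] r s t by auto
qed

lemma lemma_D:
  assumes sup: "supermart M Fl t S" and dom: "\<forall>u\<in>{0..t}. AE \<omega> in M. phi u \<omega> \<le> S u \<omega>"
    and s: "0 \<le> s" "s \<le> t"
  shows "AE \<omega> in M. R0 s \<omega> \<le> S s \<omega>"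
proof (rule ae_le_from_int)
  show sT: "s \<le> T" using s t by simp
  show "R0 s \<in> borel_measurable (Fl s)" "integrable M (R0 s)" using R0_props[OF s] by auto
  show "S s \<in> borel_measurable (Fl s)" "integrable M (S s)" using sup s unfolding supermart_def adapted_def by auto
  fix A assume A: "A \<in> sets (Fl s)"
  show "(\<integral>\<omega>. indicator A \<omega> * R0 s \<omega> \<partial>M) \<le> (\<integral>\<omega>. indicator A \<omega> * S s \<omega> \<partial>M)"
  proof (rule field_le_epsilon)
    fix e :: real assume e: "0 < e"
    define d where "d = e * (real N * m)"
    have Np: "real N * m > 0" using N1 m0 by simp
    have d: "0 < d" unfolding d_def using e Np by simp
    have de: "d / (real N * m) = e" unfolding d_def using N1 m0 by simp
    define a where "a n = (\<integral>\<omega>. K (grid s t n (idx s d n \<omega>)) \<omega> - K s \<omega> \<partial>M)" for n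
    have Ksi: "integrable M (K s)" using K_props(2) s sT by simp
    have lim: "a \<longlonglongrightarrow> (\<integral>\<omega>. 0 \<partial>M)"
      unfolding a_def
    proof (rule integral_dominated_convergence[where w="\<lambda>\<omega>. K t \<omega> - K s \<omega>"])
      show "(\<lambda>\<omega>. 0::real) \<in> borel_measurable M" by simp
      show "(\<lambda>\<omega>. K (grid s t n (idx s d n \<omega>)) \<omega> - K s \<omega>) \<in> borel_measurable M" for n
        using V_props(1)[OF s, of n d] Ksi by (auto intro: borel_measurable_integrable)
      show "integrable M (\<lambda>\<omega>. K t \<omega> - K s \<omega>)" using R0_props(4)[OF s] .
      show "AE \<omega> in M. (\<lambda>n. K (grid s t n (idx s d n \<omega>)) \<omega> - K s \<omega>) \<longlonglongrightarrow> 0"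
        using V_conv[OF s d] by eventually_elim (auto intro: tendsto_eq_intros)
      show "AE \<omega> in M. norm (K (grid s t n (idx s d n \<omega>)) \<omega> - K s \<omega>) \<le> K t \<omega> - K s \<omega>" for n
        using V_props(2)[OF s, of _ n d] by (intro AE_I2) auto
    qed
    have ev: "eventually (\<lambda>n. (\<integral>\<omega>. indicator A \<omega> * R0 s \<omega> \<partial>M) - (\<integral>\<omega>. indicator A \<omega> * S s \<omega> \<partial>M) - e \<le> a n) sequentially"
      using eventually_ge_at_top[of 1]
    proof (rule eventually_mono)
      fix n :: nat assume "1 \<le> n"
      from key_ineq[OF sup dom s d this A] show "(\<integral>\<omega>. indicator A \<omega> * R0 s \<omega> \<partial>M) - (\<integral>\<omega>. indicator A \<omega> * S s \<omega> \<partial>M) - e \<le> a n"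
        unfolding a_def de by linarith
    qed
    have "(\<integral>\<omega>. indicator A \<omega> * R0 s \<omega> \<partial>M) - (\<integral>\<omega>. indicator A \<omega> * S s \<omega> \<partial>M) - e \<le> 0"
      using tendsto_le[OF _ lim tendsto_const ev] by simp
    then show "(\<integral>\<omega>. indicator A \<omega> * R0 s \<omega> \<partial>M) \<le> (\<integral>\<omega>. indicator A \<omega> * S s \<omega> \<partial>M) + e" by simp
  qed
qed

end


context bsde_sol begin

lemma final:
  shows "snell_envelope M Fl t phi R0"
    and "\<And>R. snell_envelope M Fl t phi R \<Longrightarrow> \<forall>i<N. \<forall>s\<in>{0..t}. AE \<omega> in M. Y i s \<omega> = Xp i s \<omega> + R s \<omega>"
proof -
  show snell: "snell_envelope M Fl t phi R0"
    unfolding snell_envelope_def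
  proof (intro conjI allI impI ballI)
    show "supermart M Fl t R0" by (rule lemma_B)
    show "AE \<omega> in M. phi s \<omega> \<le> R0 s \<omega>" if "s \<in> {0..t}" for s using lemma_C that by auto
    fix S s assume "supermart M Fl t S" "\<forall>s\<in>{0..t}. AE \<omega> in M. phi s \<omega> \<le> S s \<omega>" "s \<in> {0..t}"
    then show "AE \<omega> in M. R0 s \<omega> \<le> S s \<omega>" using lemma_D by auto
  qed
  fix R assume R: "snell_envelope M Fl t phi R"
  show "\<forall>i<N. \<forall>s\<in>{0..t}. AE \<omega> in M. Y i s \<omega> = Xp i s \<omega> + R s \<omega>"
  proof (intro allI impI ballI)
    fix i s assume i: "i < N" and s: "s \<in> {0..t}"
    have "AE \<omega> in M. R s \<omega> \<le> R0 s \<omega>"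
      using R lemma_B lemma_C s unfolding snell_envelope_def by auto
    moreover have "AE \<omega> in M. R0 s \<omega> \<le> R s \<omega>"
      using R lemma_D s unfolding snell_envelope_def by auto
    moreover have "AE \<omega> in M. Y i s \<omega> = Xp i s \<omega> + R0 s \<omega>" using lemma_A i s by auto
    ultimately show "AE \<omega> in M. Y i s \<omega> = Xp i s \<omega> + R s \<omega>" by eventually_elim simp
  qed
qed

end

theorem proposition3p2:
  fixes M :: "'a measure" and N :: nat and T t m Mh :: real
    and B :: "nat \<Rightarrow> real \<Rightarrow> 'a \<Rightarrow> real"
    and G :: "(real \<Rightarrow> real) \<Rightarrow> real" and F :: "real \<Rightarrow> (real \<Rightarrow> real) \<Rightarrow> real"
    and h :: "real \<Rightarrow> real"
    and Y :: "nat \<Rightarrow> real \<Rightarrow> 'a \<Rightarrow> real" and Z :: "nat \<Rightarrow> nat \<Rightarrow> real \<Rightarrow> 'a \<Rightarrow> real"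
    and K :: "real \<Rightarrow> 'a \<Rightarrow> real"
  defines "\<F> \<equiv> aug_filt M N B"
    and "\<xi> \<equiv> (\<lambda>i \<omega>. G (restrict (\<lambda>u. B i u \<omega>) {0..T}))"
    and "f \<equiv> (\<lambda>i s \<omega>. F s (restrict (\<lambda>u. B i (min u s) \<omega>) {0..T}))"
  defines "\<theta> \<equiv> (\<lambda>i \<omega>. \<xi> i \<omega> + min_shift N h (\<lambda>j. \<xi> j \<omega>))"
    and "X \<equiv> (\<lambda>i s. real_cond_exp M (\<F> s) (\<lambda>\<omega>. Y i t \<omega> + (LINT u:{s..t}|lborel. f i u \<omega>)))"
  defines "\<phi> \<equiv> (\<lambda>s \<omega>. min_shift N h (\<lambda>i. X i s \<omega>))"
  assumes "prob_space M"
    and "T > 0" and "N \<ge> 1"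
    and "indep_std_BMs M N T B"
    and "G \<in> borel_measurable (\<Pi>\<^sub>M u\<in>{0..T}. borel)"
    and "(\<lambda>(s, x). F s x) \<in> borel_measurable (borel \<Otimes>\<^sub>M (\<Pi>\<^sub>M u\<in>{0..T}. borel))"
    and "\<forall>i<N. integrable M (\<lambda>\<omega>. (\<xi> i \<omega>)\<^sup>2)"
    and "\<forall>i<N. progressive \<F> T (f i)"
    and "\<forall>i<N. (\<integral>\<^sup>+\<omega>. (\<integral>\<^sup>+u\<in>{0..T}. ennreal ((f i u \<omega>)\<^sup>2) \<partial>lborel) \<partial>M) < \<infinity>"
    and "mono h" and "0 < m" and "m \<le> Mh"
    and "\<forall>x y. m * \<bar>x - y\<bar> \<le> \<bar>h x - h y\<bar> \<and> \<bar>h x - h y\<bar> \<le> Mh * \<bar>x - y\<bar>"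
    and "\<forall>i<N. (\<integral>\<omega>. h (\<xi> i \<omega>) \<partial>M) \<ge> 0"
    and "flat_solution M \<F> N T B h \<theta> f Y Z K"
    and "0 \<le> t" and "t \<le> T"
  shows "(\<exists>R. snell_envelope M \<F> t \<phi> R) \<and>
         (\<forall>R. snell_envelope M \<F> t \<phi> R \<longrightarrow>
            (\<forall>i<N. \<forall>s\<in>{0..t}. AE \<omega> in M. Y i s \<omega> = X i s \<omega> + R s \<omega>))"
proof -
  note defs = assms(1-6)
  have b: "bsde M N T B" unfolding bsde_def using assms(7,8,10) by auto
  have bf: "bsde_f M N T B f" unfolding bsde_f_def bsde_f_axioms_def using b assms(14,15) by (simp add: defs)
  have bs: "bsde_sol M N T B f h Y Z K \<theta> t m Mh"
    unfolding bsde_sol_def bsde_sol_axioms_def using bf assms(9,16,17,19,21,22,23) by (simp add: defs)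
  interpret S: bsde_sol M N T B f h Y Z K \<theta> t m Mh by (rule bs)
  have FF: "\<F> = aug_filt M N B" by (simp add: defs)
  have XX: "X = S.Xp" unfolding S.Xp_def by (simp add: defs fun_eq_iff)
  have PP: "\<phi> = S.phi" unfolding S.phi_def S.Xp_def by (simp add: defs fun_eq_iff)
  show ?thesis unfolding FF XX PP using S.final by blast
qed



end
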